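(* Let $\mu$ be a monotone system with support $\Omega\subseteq\{0,1\}^V$, $|V|=n$, and let $\theta\in(0,1)$. Then for every $\epsilon\in(0,1)$, \[ T^{\mathrm{GD}}_{\mathrm{mix}\text{-}\mathbf 1_V}(\mu,\epsilon)\le T^{\mathrm{FD}}_{\mathrm{mix}}\left(\mu,\theta,\tfrac\epsilon2\right)\cdot T^{\mathrm{tilted}}_{\mathrm{mix}}(\mu,\theta,\delta),\qquad\text{where }\delta=\frac{\epsilon}{2T^{\mathrm{FD}}_{\mathrm{mix}}(\mu,\theta,\frac\epsilon2)}. \]
   Context: Partial order on $\{0,1\}^S$: $X\preceq Y$ iff $X_v\le Y_v$ for all $v$. For a feasible (positive-probability) pinning $\sigma$ on $S\subseteq V$, $\mu^\sigma$ is $\mu$ conditioned on $\sigma$ and $\mu^\sigma_v$ its marginal at $v$; $\mu_\Lambda$ is the marginal on $\Lambda$. Monotone system: for every $v$ and all feasible $\sigma\preceq\tau$ in $\{0,1\}^{V\setminus\{v\}}$, $\mu^\sigma_v(1)\le\mu^\tau_v(1)$. Tilted distribution: $(\theta*\mu)(\sigma)\propto\mu(\sigma)\theta^{\|\sigma\|_1}$ on $\Omega$. Glauber dynamics $P$ on $\nu$: pick $v$ uniformly, resample $X_v\sim\nu_v^{X_{V\setminus\{v\}}}$. $T^{\mathrm{GD}}_{\mathrm{mix}\text{-}X_0}(\nu,\epsilon)=\min\{t:d_{\mathrm{TV}}(P^t(X_0,\cdot),\nu)\le\epsilon\}$; $T^{\mathrm{GD}}_{\mathrm{mix}}(\nu,\epsilon)$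 is the maximum of this over all feasible $X_0$. $T^{\mathrm{tilted}}_{\mathrm{mix}}(\mu,\theta,\epsilon)=\max\{T^{\mathrm{GD}}_{\mathrm{mix}}((\theta*\mu)^{\mathbf 1_\Lambda},\epsilon):\Lambda\subseteq V,\mu_\Lambda(\mathbf 1_\Lambda)>0\}$. Field dynamics $P_{\theta,\mu}$: from $X\in\Omega$, build a random $S\subseteq V$ including each $v$ independently with probability $\theta$ if $X_v=1$ and $1$ if $X_v=0$; then resample $X\sim(\theta*\mu)^{\mathbf 1_{V\setminus S}}$. $T^{\mathrm{FD}}_{\mathrm{mix}}(\mu,\theta,\epsilon)=\max_{X\in\Omega}\min\{t:d_{\mathrm{TV}}(P^t_{\theta,\mu}(X,\cdot),\mu)\le\epsilon\}$. *)

theory Defs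
  imports "HOL-Analysis.Analysis" "HOL-Library.Extended_Nat"
begin

text \<open>Configurations in {0,1}^V are represented by the subset of V of vertices
carrying value 1 (type 'v set). The partial order is set inclusion and the
1-norm is card.\<close>

definition is_dist :: "'v set \<Rightarrow> ('v set \<Rightarrow> real) \<Rightarrow> bool" where
  "is_dist V mu \<longleftrightarrow> (\<forall>X. 0 \<le> mu X) \<and> (\<forall>X. \<not> X \<subseteq> V \<longrightarrow> mu X = 0)
     \<and> (\<Sum>X\<in>Pow V. mu X) = 1"

definition support :: "'v set \<Rightarrow> ('v set \<Rightarrow> real) \<Rightarrow> 'v set set" where
  "support V mu = {X \<in> Pow V. mu X > 0}"

text \<open>A pinning on S \<subseteq> V is given by the subset sg \<subseteq> S of vertices pinned to 1;
a configuration X is consistent with it iff X \<inter> S = sg.\<close>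

definition pin_mass :: "'v set \<Rightarrow> ('v set \<Rightarrow> real) \<Rightarrow> 'v set \<Rightarrow> 'v set \<Rightarrow> real" where
  "pin_mass V mu S sg = (\<Sum>Y\<in>{Y \<in> Pow V. Y \<inter> S = sg}. mu Y)"

definition feasible :: "'v set \<Rightarrow> ('v set \<Rightarrow> real) \<Rightarrow> 'v set \<Rightarrow> 'v set \<Rightarrow> bool" where
  "feasible V mu S sg \<longleftrightarrow> sg \<subseteq> S \<and> S \<subseteq> V \<and> pin_mass V mu S sg > 0"

definition cond :: "'v set \<Rightarrow> ('v set \<Rightarrow> real) \<Rightarrow> 'v set \<Rightarrow> 'v set \<Rightarrow> 'v set \<Rightarrow> real" where
  "cond V mu S sg Y =
     (if Y \<subseteq> V \<and> Y \<inter> S = sg then mu Y / pin_mass V mu S sg else 0)"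

definition marg1 :: "'v set \<Rightarrow> ('v set \<Rightarrow> real) \<Rightarrow> 'v \<Rightarrow> real" where
  "marg1 V nu v = (\<Sum>Y\<in>{Y \<in> Pow V. v \<in> Y}. nu Y)"

definition monotone_system :: "'v set \<Rightarrow> ('v set \<Rightarrow> real) \<Rightarrow> bool" where
  "monotone_system V mu \<longleftrightarrow>
     (\<forall>v\<in>V. \<forall>sg tu. sg \<subseteq> tu \<and>
        feasible V mu (V - {v}) sg \<and> feasible V mu (V - {v}) tu \<longrightarrow>
        marg1 V (cond V mu (V - {v}) sg) v \<le> marg1 V (cond V mu (V - {v}) tu) v)"

definition tilt :: "'v set \<Rightarrow> real \<Rightarrow> ('v set \<Rightarrow> real) \<Rightarrow> 'v set \<Rightarrow> real" where
  "tilt V theta mu X =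
     (if X \<subseteq> V then mu X * theta ^ card X / (\<Sum>Y\<in>Pow V. mu Y * theta ^ card Y) else 0)"

definition glauber :: "'v set \<Rightarrow> ('v set \<Rightarrow> real) \<Rightarrow> 'v set \<Rightarrow> 'v set \<Rightarrow> real" where
  "glauber V nu X Y =
     (\<Sum>v\<in>V. (if Y \<subseteq> V \<and> Y - {v} = X - {v}
              then cond V nu (V - {v}) (X - {v}) Y else 0)) / real (card V)"

text \<open>Field dynamics kernel: S contains every 0-vertex of X and each 1-vertex of X
independently with probability theta; then resample from (theta * mu) pinned to 1
on V - S.\<close>
definition field_dyn :: "'v set \<Rightarrow> ('v set \<Rightarrow> real) \<Rightarrow> real \<Rightarrow> 'v set \<Rightarrow> 'v set \<Rightarrow> real" where
  "field_dyn V mu theta X Y =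
     (\<Sum>S\<in>{S \<in> Pow V. V - X \<subseteq> S}.
        theta ^ card (S \<inter> X) * (1 - theta) ^ card (X - S) *
        cond V (tilt V theta mu) (V - S) (V - S) Y)"

definition step :: "'v set \<Rightarrow> ('v set \<Rightarrow> 'v set \<Rightarrow> real) \<Rightarrow> ('v set \<Rightarrow> real) \<Rightarrow> 'v set \<Rightarrow> real" where
  "step V P d = (\<lambda>Y. \<Sum>X\<in>Pow V. d X * P X Y)"

definition distr_at :: "'v set \<Rightarrow> ('v set \<Rightarrow> 'v set \<Rightarrow> real) \<Rightarrow> 'v set \<Rightarrow> nat \<Rightarrow> 'v set \<Rightarrow> real" where
  "distr_at V P x0 t = (step V P ^^ t) (\<lambda>Y. if Y = x0 then 1 else 0)"

definition dTV :: "'v set \<Rightarrow> ('v set \<Rightarrow> real) \<Rightarrow> ('v set \<Rightarrow> real) \<Rightarrow> real" where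
  "dTV V p q = (\<Sum>Y\<in>Pow V. \<bar>p Y - q Y\<bar>) / 2"

definition mix_from :: "'v set \<Rightarrow> ('v set \<Rightarrow> 'v set \<Rightarrow> real) \<Rightarrow> ('v set \<Rightarrow> real)
                        \<Rightarrow> 'v set \<Rightarrow> real \<Rightarrow> enat" where
  "mix_from V P target x0 eps =
     (if \<exists>t. dTV V (distr_at V P x0 t) target \<le> eps
      then enat (LEAST t. dTV V (distr_at V P x0 t) target \<le> eps) else \<infinity>)"

definition T_GD_from :: "'v set \<Rightarrow> ('v set \<Rightarrow> real) \<Rightarrow> 'v set \<Rightarrow> real \<Rightarrow> enat" where
  "T_GD_from V nu x0 eps = mix_from V (glauber V nu) nu x0 eps"

definition T_GD :: "'v set \<Rightarrow> ('v set \<Rightarrow> real) \<Rightarrow> real \<Rightarrow> enat" where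
  "T_GD V nu eps = (SUP x0 \<in> support V nu. T_GD_from V nu x0 eps)"

definition T_tilted :: "'v set \<Rightarrow> ('v set \<Rightarrow> real) \<Rightarrow> real \<Rightarrow> real \<Rightarrow> enat" where
  "T_tilted V mu theta eps =
     (SUP L \<in> {L. L \<subseteq> V \<and> pin_mass V mu L L > 0}.
        T_GD V (cond V (tilt V theta mu) L L) eps)"

definition T_FD :: "'v set \<Rightarrow> ('v set \<Rightarrow> real) \<Rightarrow> real \<Rightarrow> real \<Rightarrow> enat" where
  "T_FD V mu theta eps =
     (SUP X \<in> support V mu. mix_from V (field_dyn V mu theta) mu X eps)"

end

theory Submission
  imports Defs
begin

lemma two_point:
  fixes a0 a1 b0 b1 x0 x1 y0 y1 :: real
  assumes "a0 \<ge> 0" "a1 \<ge> 0" "b0 \<ge> 0" "b1 \<ge> 0" "a0 + a1 > 0" "b0 + b1 > 0"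
    and "a1 * b0 \<le> a0 * b1"
    and "a0 > 0 \<Longrightarrow> b0 > 0 \<Longrightarrow> x0 \<le> y0"
    and "a1 > 0 \<Longrightarrow> b1 > 0 \<Longrightarrow> x1 \<le> y1"
    and "a0 > 0 \<Longrightarrow> b1 > 0 \<Longrightarrow> x0 \<le> y1"
  shows "(a0 * x0 + a1 * x1) / (a0 + a1) \<le> (b0 * y0 + b1 * y1) / (b0 + b1)"
proof -
  have t1: "a0 * b0 * (y0 - x0) \<ge> 0"
  proof (cases "a0 > 0 \<and> b0 > 0")
    case True then show ?thesis using assms by (auto intro!: mult_nonneg_nonneg)
  next
    case False then have "a0 = 0 \<or> b0 = 0" using assms by linarith
    then show ?thesis by auto
  qed
  have t2: "a0 * b1 * (y1 - x0) \<ge> 0"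
  proof (cases "a0 > 0 \<and> b1 > 0")
    case True then show ?thesis using assms by (auto intro!: mult_nonneg_nonneg)
  next
    case False then have "a0 = 0 \<or> b1 = 0" using assms by linarith
    then show ?thesis by auto
  qed
  have t3: "a1 * b1 * (y1 - x1) \<ge> 0"
  proof (cases "a1 > 0 \<and> b1 > 0")
    case True then show ?thesis using assms by (auto intro!: mult_nonneg_nonneg)
  next
    case False then have "a1 = 0 \<or> b1 = 0" using assms by linarith
    then show ?thesis by auto
  qed
  have t4: "a1 * b0 * (y0 - x1) + a0 * b1 * (y1 - x0) \<ge> 0"
  proof (cases "a1 * b0 > 0")
    case True
    then have p: "a1 > 0" "b0 > 0" using assms(2,3) by (auto simp: zero_less_mult_iff)
    have "a0 * b1 > 0" using True assms(7) by linarith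
    then have q: "a0 > 0" "b1 > 0" using assms(1,4) by (auto simp: zero_less_mult_iff)
    have xy: "x0 \<le> y0" "x1 \<le> y1" "x0 \<le> y1" using p q assms(8,9,10) by auto
    have "a0 * b1 * (y1 - x0) \<ge> a1 * b0 * (y1 - x0)"
      using assms(7) xy(3) by (intro mult_right_mono) auto
    moreover have "a1 * b0 * (y0 - x1) + a1 * b0 * (y1 - x0) = a1 * b0 * ((y0 - x0) + (y1 - x1))"
      by (simp add: algebra_simps)
    moreover have "a1 * b0 * ((y0 - x0) + (y1 - x1)) \<ge> 0"
      using p xy by (intro mult_nonneg_nonneg) auto
    ultimately show ?thesis by linarith
  next
    case False
    then have "a1 * b0 = 0" using mult_nonneg_nonneg[OF assms(3,2)] by (simp add: mult.commute)
    then show ?thesis using t2 by auto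
  qed
  have "(a0 * x0 + a1 * x1) * (b0 + b1) \<le> (b0 * y0 + b1 * y1) * (a0 + a1)"
    using t1 t2 t3 t4 by (simp add: algebra_simps)
  then show ?thesis using assms(5,6) by (simp add: divide_simps)
qed

locale fkern =
  fixes D :: "'s set" and pi :: "'s \<Rightarrow> real" and le :: "'s \<Rightarrow> 's \<Rightarrow> bool"
  assumes finD: "finite D" and pipos: "\<And>s. s \<in> D \<Longrightarrow> pi s > 0"
begin

definition push :: "('s \<Rightarrow> 's \<Rightarrow> real) \<Rightarrow> ('s \<Rightarrow> real) \<Rightarrow> 's \<Rightarrow> real" where
  "push K p t = (\<Sum>s\<in>D. p s * K s t)"
definition app :: "('s \<Rightarrow> 's \<Rightarrow> real) \<Rightarrow> ('s \<Rightarrow> real) \<Rightarrow> 's \<Rightarrow> real" where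
  "app K g s = (\<Sum>t\<in>D. K s t * g t)"
definition ip :: "('s \<Rightarrow> real) \<Rightarrow> ('s \<Rightarrow> real) \<Rightarrow> real" where
  "ip p g = (\<Sum>s\<in>D. p s * g s)"
definition inc :: "('s \<Rightarrow> real) \<Rightarrow> bool" where
  "inc g \<longleftrightarrow> (\<forall>s\<in>D. \<forall>t\<in>D. le s t \<longrightarrow> g s \<le> g t)"
definition dom :: "('s \<Rightarrow> real) \<Rightarrow> ('s \<Rightarrow> real) \<Rightarrow> bool" where
  "dom p q \<longleftrightarrow> (\<forall>g. inc g \<longrightarrow> ip p g \<le> ip q g)"
definition monok :: "('s \<Rightarrow> 's \<Rightarrow> real) \<Rightarrow> bool" where
  "monok K \<longleftrightarrow> (\<forall>g. inc g \<longrightarrow> inc (app K g))"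
definition revk :: "('s \<Rightarrow> 's \<Rightarrow> real) \<Rightarrow> bool" where
  "revk K \<longleftrightarrow> (\<forall>s\<in>D. \<forall>t\<in>D. pi s * K s t = pi t * K t s)"
definition dens :: "('s \<Rightarrow> real) \<Rightarrow> bool" where
  "dens p \<longleftrightarrow> (\<exists>h. inc h \<and> (\<forall>s\<in>D. p s = pi s * h s))"
definition hb :: "('s \<Rightarrow> 's \<Rightarrow> bool) \<Rightarrow> 's \<Rightarrow> 's \<Rightarrow> real" where
  "hb E s t = (if t \<in> D \<and> E s t then pi t / (\<Sum>u\<in>{u\<in>D. E s u}. pi u) else 0)"
definition equivD :: "('s \<Rightarrow> 's \<Rightarrow> bool) \<Rightarrow> bool" where
  "equivD E \<longleftrightarrow> (\<forall>s\<in>D. E s s) \<and> (\<forall>s\<in>D. \<forall>t\<in>D. E s t \<longrightarrow> E t s)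
     \<and> (\<forall>s\<in>D. \<forall>t\<in>D. \<forall>u\<in>D. E s t \<longrightarrow> E t u \<longrightarrow> E s u)"

lemma ip_push: "ip (push K p) g = ip p (app K g)"
  unfolding ip_def push_def app_def
  by (simp add: sum_distrib_left sum_distrib_right mult_ac) (rule sum.swap)

lemma dom_refl: "dom p p" by (simp add: dom_def)
lemma dom_trans: "dom p q \<Longrightarrow> dom q r \<Longrightarrow> dom p r"
  unfolding dom_def by (meson order_trans)

lemma dom_push: "monok K \<Longrightarrow> dom p q \<Longrightarrow> dom (push K p) (push K q)"
  unfolding dom_def monok_def by (simp add: ip_push)

lemma rev_app_swap:
  assumes "revk K"
  shows "ip (\<lambda>s. pi s * h s) (app K u) = ip (\<lambda>s. pi s * app K h s) u"
proof -
  have "ip (\<lambda>s. pi s * h s) (app K u) = (\<Sum>s\<in>D. \<Sum>t\<in>D. (pi s * K s t) * h s * u t)"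
    unfolding ip_def app_def by (simp add: sum_distrib_left mult_ac)
  also have "\<dots> = (\<Sum>s\<in>D. \<Sum>t\<in>D. (pi t * K t s) * h s * u t)"
    using assms unfolding revk_def by (intro sum.cong refl) auto
  also have "\<dots> = (\<Sum>t\<in>D. \<Sum>s\<in>D. (pi t * K t s) * h s * u t)"
    by (rule sum.swap)
  also have "\<dots> = ip (\<lambda>s. pi s * app K h s) u"
    unfolding ip_def app_def by (simp add: sum_distrib_left sum_distrib_right mult_ac)
  finally show ?thesis .
qed

lemma push_dens_eq:
  assumes "revk K" "\<forall>s\<in>D. p s = pi s * h s" "t \<in> D"
  shows "push K p t = pi t * app K h t"
proof -
  have "push K p t = (\<Sum>s\<in>D. pi s * K s t * h s)"
    unfolding push_def using assms(2) by (intro sum.cong refl) (simp add: mult_ac)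
  also have "\<dots> = (\<Sum>s\<in>D. pi t * K t s * h s)"
    using assms(1,3) unfolding revk_def by (intro sum.cong refl) auto
  also have "\<dots> = pi t * app K h t"
    unfolding app_def by (simp add: sum_distrib_left mult_ac)
  finally show ?thesis .
qed

lemma dens_push: "revk K \<Longrightarrow> monok K \<Longrightarrow> dens p \<Longrightarrow> dens (push K p)"
  unfolding dens_def monok_def
  by (metis push_dens_eq)

lemma hb_nonneg: "hb E s t \<ge> 0"
proof -
  have "(\<Sum>u\<in>{u\<in>D. E s u}. pi u) \<ge> 0" using pipos by (intro sum_nonneg) (auto intro: less_imp_le)
  moreover have "t \<in> D \<Longrightarrow> pi t \<ge> 0" using pipos less_imp_le by blast
  ultimately show ?thesis unfolding hb_def by (simp add: divide_nonneg_nonneg)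
qed

lemma class_eq:
  assumes "equivD E" "s \<in> D" "t \<in> D" "E s t"
  shows "{u\<in>D. E s u} = {u\<in>D. E t u}"
proof -
  have sym: "\<And>a b. a \<in> D \<Longrightarrow> b \<in> D \<Longrightarrow> E a b \<Longrightarrow> E b a"
    and tr: "\<And>a b c. a \<in> D \<Longrightarrow> b \<in> D \<Longrightarrow> c \<in> D \<Longrightarrow> E a b \<Longrightarrow> E b c \<Longrightarrow> E a c"
    using assms(1) unfolding equivD_def by metis+
  show ?thesis using sym tr assms(2-4) by blast
qed

lemma hb_class:
  assumes "equivD E" "s \<in> D" "t \<in> D" "E s t"
  shows "hb E t = hb E s"
proof
  fix u
  have "\<And>u. u \<in> D \<Longrightarrow> E t u = E s u" using class_eq[OF assms] by blast
  then show "hb E t u = hb E s u"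
    using class_eq[OF assms] unfolding hb_def by (cases "u \<in> D") auto
qed

lemma hb_rev: "equivD E \<Longrightarrow> revk (hb E)"
  unfolding revk_def
proof (intro ballI)
  fix s t assume E: "equivD E" and st: "s \<in> D" "t \<in> D"
  show "pi s * hb E s t = pi t * hb E t s"
  proof (cases "E s t")
    case True
    then have "E t s" using E st unfolding equivD_def by blast
    then show ?thesis using True class_eq[OF E st True] st unfolding hb_def by simp
  next
    case False
    then have "\<not> E t s" using E st unfolding equivD_def by blast
    then show ?thesis using False unfolding hb_def by simp
  qed
qed

lemma hb_rows:
  assumes "equivD E" "s \<in> D"
  shows "(\<Sum>t\<in>D. hb E s t) = 1"
proof -
  have pos: "(\<Sum>u\<in>{u\<in>D. E s u}. pi u) > 0"
    using assms finD pipos unfolding equivD_def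
    by (intro sum_pos2[where i=s]) (auto intro: less_imp_le)
  have "(\<Sum>t\<in>D. hb E s t) = (\<Sum>t\<in>{u\<in>D. E s u}. pi t / (\<Sum>u\<in>{u\<in>D. E s u}. pi u))"
    unfolding hb_def using finD by (intro sum.mono_neutral_cong_right) auto
  also have "\<dots> = 1" using pos by (simp add: sum_divide_distrib[symmetric])
  finally show ?thesis .
qed

lemma app_hb:
  "app (hb E) g s = (\<Sum>u\<in>{u\<in>D. E s u}. pi u * g u) / (\<Sum>u\<in>{u\<in>D. E s u}. pi u)"
proof -
  have "app (hb E) g s = (\<Sum>t\<in>{u\<in>D. E s u}. pi t / (\<Sum>u\<in>{u\<in>D. E s u}. pi u) * g t)"
    unfolding app_def hb_def using finD by (intro sum.mono_neutral_cong_right) auto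
  then show ?thesis by (simp add: sum_divide_distrib[symmetric] mult_ac)
qed

lemma refine:
  assumes E: "equivD E" and E': "equivD E'" and sub: "\<And>s t. s \<in> D \<Longrightarrow> t \<in> D \<Longrightarrow> E' s t \<Longrightarrow> E s t"
    and s: "s \<in> D"
  shows "app (hb E') (app (hb E) g) s = app (hb E) g s"
proof -
  have "app (hb E') (app (hb E) g) s = (\<Sum>t\<in>D. hb E' s t * app (hb E) g s)"
    unfolding app_def[of "hb E'" "app (hb E) g"]
  proof (intro sum.cong refl)
    fix t assume t: "t \<in> D"
    show "hb E' s t * app (hb E) g t = hb E' s t * app (hb E) g s"
    proof (cases "E' s t")
      case True
      then have "hb E t = hb E s" using hb_class[OF E s t] sub[OF s t] by blast
      then show ?thesis unfolding app_def by simp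
    next
      case False then show ?thesis unfolding hb_def by simp
    qed
  qed
  also have "\<dots> = app (hb E) g s" using hb_rows[OF E' s] by (simp add: sum_distrib_right[symmetric])
  finally show ?thesis unfolding app_def .
qed

lemma cheb:
  assumes E: "equivD E" and ch: "\<And>s t. s \<in> D \<Longrightarrow> t \<in> D \<Longrightarrow> E s t \<Longrightarrow> le s t \<or> le t s"
    and h: "inc h" and g: "inc g"
  shows "ip (\<lambda>s. pi s * h s) (app (hb E) g) \<le> ip (\<lambda>s. pi s * h s) g"
proof -
  define k where "k s t = pi s * hb E s t" for s t
  have ksym: "k s t = k t s" if "s \<in> D" "t \<in> D" for s t
    using hb_rev[OF E] that unfolding revk_def k_def by auto
  have L: "ip (\<lambda>s. pi s * h s) (app (hb E) g) = (\<Sum>s\<in>D. \<Sum>t\<in>D. k s t * h s * g t)"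
    unfolding ip_def app_def k_def by (simp add: sum_distrib_left mult_ac)
  have R: "ip (\<lambda>s. pi s * h s) g = (\<Sum>s\<in>D. \<Sum>t\<in>D. k s t * h s * g s)"
  proof -
    have "ip (\<lambda>s. pi s * h s) g = (\<Sum>s\<in>D. pi s * h s * g s * (\<Sum>t\<in>D. hb E s t))"
      unfolding ip_def using hb_rows[OF E] by simp
    then show ?thesis unfolding k_def by (simp add: sum_distrib_left mult_ac)
  qed
  define Q where "Q = (\<Sum>s\<in>D. \<Sum>t\<in>D. k s t * h s * (g s - g t))"
  have Q1: "Q = (\<Sum>s\<in>D. \<Sum>t\<in>D. k s t * h t * (g t - g s))"
  proof -
    have "Q = (\<Sum>t\<in>D. \<Sum>s\<in>D. k s t * h s * (g s - g t))"
      unfolding Q_def by (rule sum.swap)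
    also have "\<dots> = (\<Sum>t\<in>D. \<Sum>s\<in>D. k t s * h s * (g s - g t))"
      using ksym by (intro sum.cong refl) auto
    finally show ?thesis by simp
  qed
  have "2 * Q = (\<Sum>s\<in>D. \<Sum>t\<in>D. k s t * h s * (g s - g t)) + (\<Sum>s\<in>D. \<Sum>t\<in>D. k s t * h t * (g t - g s))"
    using Q1 unfolding Q_def by simp
  also have "\<dots> = (\<Sum>s\<in>D. \<Sum>t\<in>D. k s t * ((h s - h t) * (g s - g t)))"
    by (simp add: sum.distrib[symmetric] algebra_simps)
  also have "\<dots> \<ge> 0"
  proof (intro sum_nonneg)
    fix s t assume st: "s \<in> D" "t \<in> D"
    show "0 \<le> k s t * ((h s - h t) * (g s - g t))"
    proof (cases "E s t")
      case True
      then have "le s t \<or> le t s" using ch st by blast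
      then have "(h s - h t) * (g s - g t) \<ge> 0"
        using h g st unfolding inc_def
        by (metis diff_ge_0_iff_ge mult_nonneg_nonneg mult_nonpos_nonpos diff_le_0_iff_le)
      moreover have "k s t \<ge> 0" unfolding k_def using pipos st hb_nonneg
        by (simp add: less_imp_le)
      ultimately show ?thesis by simp
    next
      case False then show ?thesis unfolding k_def hb_def by simp
    qed
  qed
  finally have "Q \<ge> 0" by simp
  moreover have "Q = ip (\<lambda>s. pi s * h s) g - ip (\<lambda>s. pi s * h s) (app (hb E) g)"
  proof -
    have "Q = (\<Sum>s\<in>D. (\<Sum>t\<in>D. k s t * h s * g s) - (\<Sum>t\<in>D. k s t * h s * g t))"
      unfolding Q_def by (simp add: right_diff_distrib sum_subtractf)
    also have "\<dots> = (\<Sum>s\<in>D. \<Sum>t\<in>D. k s t * h s * g s) - (\<Sum>s\<in>D. \<Sum>t\<in>D. k s t * h s * g t)"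
      by (rule sum_subtractf)
    finally show ?thesis unfolding L R .
  qed
  ultimately show ?thesis by simp
qed

lemma censor:
  assumes E: "equivD E" and E': "equivD E'" and sub: "\<And>s t. s \<in> D \<Longrightarrow> t \<in> D \<Longrightarrow> E' s t \<Longrightarrow> E s t"
    and ch: "\<And>s t. s \<in> D \<Longrightarrow> t \<in> D \<Longrightarrow> E s t \<Longrightarrow> le s t \<or> le t s"
    and mJ: "monok (hb E')" and p: "dens p" and g: "inc g"
  shows "ip (push (hb E) p) g \<le> ip (push (hb E') p) g"
proof -
  obtain h where h: "inc h" "\<forall>s\<in>D. p s = pi s * h s" using p unfolding dens_def by blast
  have pe: "ip p u = ip (\<lambda>s. pi s * h s) u" for u unfolding ip_def using h(2) by simp
  have "ip (push (hb E) p) g = ip (\<lambda>s. pi s * h s) (app (hb E) g)"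
    by (simp add: ip_push pe)
  also have "\<dots> = ip (\<lambda>s. pi s * h s) (app (hb E') (app (hb E) g))"
    unfolding ip_def using refine[OF E E' sub] by simp
  also have "\<dots> = ip (\<lambda>s. pi s * app (hb E') h s) (app (hb E) g)"
    by (rule rev_app_swap[OF hb_rev[OF E']])
  also have "\<dots> \<le> ip (\<lambda>s. pi s * app (hb E') h s) g"
    using mJ h(1) g unfolding monok_def by (intro cheb[OF E ch]) auto
  also have "\<dots> = ip (\<lambda>s. pi s * h s) (app (hb E') g)"
    by (rule rev_app_swap[OF hb_rev[OF E'], symmetric])
  also have "\<dots> = ip (push (hb E') p) g" by (simp add: ip_push pe)
  finally show ?thesis .
qed

definition avgk :: "'i set \<Rightarrow> ('i \<Rightarrow> 's \<Rightarrow> 's \<Rightarrow> real) \<Rightarrow> 's \<Rightarrow> 's \<Rightarrow> real" where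
  "avgk I Ks s t = (\<Sum>i\<in>I. Ks i s t) / real (card I)"

lemma ip_push_avg: "ip (push (avgk I Ks) p) g = (\<Sum>i\<in>I. ip (push (Ks i) p) g) / real (card I)"
  unfolding ip_def push_def avgk_def
  by (simp add: sum_distrib_left sum_distrib_right sum_divide_distrib[symmetric] mult_ac
      sum.swap[of _ I D] sum.swap[of _ I D])

lemma app_avg: "app (avgk I Ks) g s = (\<Sum>i\<in>I. app (Ks i) g s) / real (card I)"
  unfolding app_def avgk_def
  by (simp add: sum_distrib_left sum_distrib_right sum_divide_distrib[symmetric] mult_ac
      sum.swap[of _ I D])

lemma inc_sum: "(\<And>i. i \<in> I \<Longrightarrow> inc (f i)) \<Longrightarrow> inc (\<lambda>s. (\<Sum>i\<in>I. f i s) / real (card I))"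
  unfolding inc_def by (auto intro!: divide_right_mono sum_mono)

lemma monok_avg: "(\<And>i. i \<in> I \<Longrightarrow> monok (Ks i)) \<Longrightarrow> monok (avgk I Ks)"
  unfolding monok_def app_avg by (auto intro!: inc_sum)

lemma revk_avg: "(\<And>i. i \<in> I \<Longrightarrow> revk (Ks i)) \<Longrightarrow> revk (avgk I Ks)"
  unfolding revk_def avgk_def by (auto simp: sum_distrib_left intro!: sum.cong)

lemma censor_avg:
  assumes "\<And>i. i \<in> I \<Longrightarrow> ip (push (B i) p) g \<le> ip (push (J i) p) g"
  shows "ip (push (avgk I B) p) g \<le> ip (push (avgk I J) p) g"
  unfolding ip_push_avg using assms by (auto intro!: divide_right_mono sum_mono)

lemma dens_delta:
  assumes "tp \<in> D" "\<And>s. s \<in> D \<Longrightarrow> le tp s \<Longrightarrow> s = tp"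
  shows "dens (\<lambda>s. if s = tp then 1 else 0)"
  unfolding dens_def
proof (intro exI conjI)
  let ?h = "\<lambda>s. if s = tp then 1 / pi tp else 0"
  show "inc ?h" unfolding inc_def using assms pipos[OF assms(1)] by auto
  show "\<forall>s\<in>D. (if s = tp then 1 else 0) = pi s * ?h s" using pipos[OF assms(1)] by auto
qed

lemma tv_compare:
  assumes f: "dens f" and fc: "dom f c"
  shows "(\<Sum>s\<in>D. \<bar>f s - pi s\<bar>) \<le> (\<Sum>s\<in>D. \<bar>c s - pi s\<bar>)"
proof -
  obtain h where h: "inc h" "\<forall>s\<in>D. f s = pi s * h s" using f unfolding dens_def by blast
  define g where "g s = (if h s > 1 then 1 else (0::real))" for s
  have ginc: "inc g" using h(1) unfolding inc_def g_def by fastforce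
  have "ip f (\<lambda>_. 1) \<le> ip c (\<lambda>_. 1)" using fc unfolding dom_def inc_def by auto
  moreover have "ip f (\<lambda>_. -1) \<le> ip c (\<lambda>_. -1)" using fc unfolding dom_def inc_def by auto
  ultimately have sumeq: "(\<Sum>s\<in>D. f s) = (\<Sum>s\<in>D. c s)" unfolding ip_def by (simp add: sum_negf)
  have gle: "ip f g \<le> ip c g" using fc ginc unfolding dom_def by auto
  have e1: "\<bar>f s - pi s\<bar> = 2 * (g s * (f s - pi s)) - (f s - pi s)" if "s \<in> D" for s
  proof -
    have fe: "f s - pi s = pi s * (h s - 1)" using h(2) that by (simp add: algebra_simps)
    show ?thesis
    proof (cases "h s > 1")
      case True
      then have "f s - pi s > 0" unfolding fe using pipos[OF that] by simp
      then show ?thesis using True unfolding g_def by simp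
    next
      case False
      then have "f s - pi s \<le> 0" unfolding fe using pipos[OF that]
        by (intro mult_nonneg_nonpos) auto
      then show ?thesis using False unfolding g_def by simp
    qed
  qed
  have e2: "\<bar>c s - pi s\<bar> \<ge> 2 * (g s * (c s - pi s)) - (c s - pi s)" for s
    unfolding g_def by auto
  have "(\<Sum>s\<in>D. \<bar>f s - pi s\<bar>) = (\<Sum>s\<in>D. 2 * (g s * (f s - pi s)) - (f s - pi s))"
    using e1 by simp
  also have "\<dots> = 2 * ip f g - 2 * ip pi g - (\<Sum>s\<in>D. f s) + (\<Sum>s\<in>D. pi s)"
    unfolding ip_def by (simp add: sum_subtractf sum_distrib_left algebra_simps sum.distrib)
  also have "\<dots> \<le> 2 * ip c g - 2 * ip pi g - (\<Sum>s\<in>D. c s) + (\<Sum>s\<in>D. pi s)"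
    using gle sumeq by simp
  also have "\<dots> = (\<Sum>s\<in>D. 2 * (g s * (c s - pi s)) - (c s - pi s))"
    unfolding ip_def by (simp add: sum_subtractf sum_distrib_left algebra_simps sum.distrib)
  also have "\<dots> \<le> (\<Sum>s\<in>D. \<bar>c s - pi s\<bar>)" by (intro sum_mono e2)
  finally show ?thesis .
qed

end

lemma sum_pow_subsets:
  fixes a b :: real
  assumes "finite A"
  shows "(\<Sum>T\<in>Pow A. a ^ card T * b ^ card (A - T)) = (a + b) ^ card A"
  using assms
proof (induction A rule: finite_induct)
  case empty then show ?case by simp
next
  case (insert x A)
  have fin: "finite (Pow A)" using insert by simp
  have disj: "Pow A \<inter> insert x ` Pow A = {}" using insert by auto
  have inj: "inj_on (insert x) (Pow A)"
    unfolding inj_on_def using insert(2) by (metis PowD insert_ident subsetD)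
  have s1: "card (insert x A - T) = Suc (card (A - T))" if "T \<in> Pow A" for T
  proof -
    have "insert x A - T = insert x (A - T)" using that insert(2) by auto
    then show ?thesis using insert(1,2) by simp
  qed
  have s2: "card (insert x T) = Suc (card T)" if "T \<in> Pow A" for T
    using that insert(1,2) by (meson PowD card_insert_disjoint finite_subset subsetD)
  have s3: "insert x A - insert x T = A - T" if "T \<in> Pow A" for T
    using that insert(2) by auto
  have "(\<Sum>T\<in>Pow (insert x A). a ^ card T * b ^ card (insert x A - T))
      = (\<Sum>T\<in>Pow A. a ^ card T * b ^ card (insert x A - T))
        + (\<Sum>T\<in>insert x ` Pow A. a ^ card T * b ^ card (insert x A - T))"
    unfolding Pow_insert using fin disj by (intro sum.union_disjoint) auto
  also have "(\<Sum>T\<in>Pow A. a ^ card T * b ^ card (insert x A - T))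
      = b * (\<Sum>T\<in>Pow A. a ^ card T * b ^ card (A - T))"
    by (simp add: sum_distrib_left s1 mult_ac)
  also have "(\<Sum>T\<in>insert x ` Pow A. a ^ card T * b ^ card (insert x A - T))
      = (\<Sum>T\<in>Pow A. a ^ card (insert x T) * b ^ card (insert x A - insert x T))"
    by (rule sum.reindex[OF inj, unfolded comp_def])
  also have "\<dots> = (\<Sum>T\<in>Pow A. a * (a ^ card T * b ^ card (A - T)))"
  proof (intro sum.cong refl)
    fix T assume T: "T \<in> Pow A"
    show "a ^ card (insert x T) * b ^ card (insert x A - insert x T) = a * (a ^ card T * b ^ card (A - T))"
      by (subst s2[OF T], subst s3[OF T]) simp
  qed
  also have "\<dots> = a * (\<Sum>T\<in>Pow A. a ^ card T * b ^ card (A - T))"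
    by (simp add: sum_distrib_left)
  finally show ?case using insert by (simp add: algebra_simps)
qed

lemma diffv_sub: "A - {v} = B - {v} \<Longrightarrow> v \<notin> A \<or> v \<in> B \<Longrightarrow> A \<subseteq> B"
  by blast

locale msys =
  fixes V :: "'v set" and mu :: "'v set \<Rightarrow> real" and theta :: real
  assumes finV: "finite V" and dist: "is_dist V mu" and mon: "monotone_system V mu"
    and muV: "mu V > 0" and th0: "0 < theta" and th1: "theta < 1" and Vne: "V \<noteq> {}"
begin

definition Om :: "'v set set" where "Om = {X \<in> Pow V. mu X > 0}"
definition wt :: "'v set \<Rightarrow> 'v set \<Rightarrow> real" where
  "wt X R = (1 - theta) ^ card R * theta ^ card (X - R)"
definition DD :: "('v set \<times> 'v set) set" where "DD = Sigma Om Pow"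
definition pi2 :: "'v set \<times> 'v set \<Rightarrow> real" where
  "pi2 s = (if snd s \<subseteq> fst s then mu (fst s) * wt (fst s) (snd s) else 0)"
definition le2 :: "'v set \<times> 'v set \<Rightarrow> 'v set \<times> 'v set \<Rightarrow> bool" where
  "le2 s t \<longleftrightarrow> fst s \<subseteq> fst t \<and> snd s \<subseteq> snd t"

lemma mu_nonneg: "mu X \<ge> 0" using dist unfolding is_dist_def by auto

lemma wt_pos: "wt X R > 0" unfolding wt_def using th0 th1 by simp

lemma finOm: "finite Om" unfolding Om_def using finV by simp

lemma finDD: "finite DD" unfolding DD_def using finOm Om_def finV
  by (intro finite_SigmaI) (auto intro: finite_subset)

lemma Om_sub: "X \<in> Om \<Longrightarrow> X \<subseteq> V" unfolding Om_def by auto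

lemma pi2_pos: "s \<in> DD \<Longrightarrow> pi2 s > 0"
  unfolding DD_def pi2_def Om_def using wt_pos by auto

lemma pi2_nonneg: "pi2 s \<ge> 0"
  unfolding pi2_def using wt_pos mu_nonneg by (simp add: less_imp_le)

lemma pi2_DD: "fst c \<subseteq> V \<Longrightarrow> pi2 c \<noteq> 0 \<Longrightarrow> c \<in> DD"
  unfolding DD_def pi2_def Om_def using mu_nonneg
  by (cases c) (auto split: if_splits simp: order.not_eq_order_implies_strict)

lemma wt_sum: assumes "finite X" shows "(\<Sum>R\<in>Pow X. wt X R) = 1"
  unfolding wt_def using sum_pow_subsets[OF assms, of "1 - theta" theta] by simp

sublocale K: fkern DD pi2 le2
  by unfold_locales (auto simp: finDD pi2_pos)

definition EF :: "'v set \<times> 'v set \<Rightarrow> 'v set \<times> 'v set \<Rightarrow> bool" where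
  "EF s t \<longleftrightarrow> fst s = fst t"
definition EJ :: "'v \<Rightarrow> 'v set \<times> 'v set \<Rightarrow> 'v set \<times> 'v set \<Rightarrow> bool" where
  "EJ v s t \<longleftrightarrow> snd s = snd t \<and> fst s - {v} = fst t - {v}"
definition EB :: "'v \<Rightarrow> 'v set \<times> 'v set \<Rightarrow> 'v set \<times> 'v set \<Rightarrow> bool" where
  "EB v s t \<longleftrightarrow> fst s - {v} = fst t - {v} \<and> snd s - {v} = snd t - {v}"

lemma equiv_EF: "K.equivD EF" unfolding K.equivD_def EF_def by auto
lemma equiv_EJ: "K.equivD (EJ v)" unfolding K.equivD_def EJ_def by auto
lemma equiv_EB: "K.equivD (EB v)" unfolding K.equivD_def EB_def by auto
lemma EJ_EB: "EJ v s t \<Longrightarrow> EB v s t" unfolding EJ_def EB_def by auto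

lemma EB_chain:
  assumes "s \<in> DD" "t \<in> DD" "EB v s t"
  shows "le2 s t \<or> le2 t s"
proof -
  obtain X R Y S where st: "s = (X, R)" "t = (Y, S)" by (cases s, cases t) auto
  have RX: "R \<subseteq> X" and SY: "S \<subseteq> Y" using assms st unfolding DD_def by auto
  have e1: "X - {v} = Y - {v}" and e2: "R - {v} = S - {v}" using assms(3) st unfolding EB_def by auto
  show ?thesis
  proof (cases "v \<in> X")
    case vX: True
    show ?thesis
    proof (cases "v \<in> Y")
      case vY: True
      have XY: "X = Y" using e1 vX vY by (metis insert_Diff)
      show ?thesis
      proof (cases "v \<in> R")
        case True
        then have "S \<subseteq> R" using diffv_sub[OF e2[symmetric]] by blast
        then show ?thesis using XY st unfolding le2_def by auto
      next
        case False
        then have "R \<subseteq> S" using diffv_sub[OF e2] by blast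
        then show ?thesis using XY st unfolding le2_def by auto
      qed
    next
      case vY: False
      then have "Y \<subseteq> X" using diffv_sub[OF e1[symmetric]] by blast
      moreover have "v \<notin> S" using vY SY by blast
      then have "S \<subseteq> R" using diffv_sub[OF e2[symmetric]] by blast
      ultimately show ?thesis using st unfolding le2_def by auto
    qed
  next
    case vX: False
    then have "X \<subseteq> Y" using diffv_sub[OF e1] by blast
    moreover have "v \<notin> R" using vX RX by blast
    then have "R \<subseteq> S" using diffv_sub[OF e2] by blast
    ultimately show ?thesis using st unfolding le2_def by auto
  qed
qed

lemma pm_eq:
  assumes "v \<in> V" "sg \<subseteq> V - {v}"
  shows "pin_mass V mu (V - {v}) sg = mu sg + mu (insert v sg)"
proof -
  have "{Y \<in> Pow V. Y \<inter> (V - {v}) = sg} = {sg, insert v sg}"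
  proof (intro set_eqI iffI)
    fix Y assume "Y \<in> {Y \<in> Pow V. Y \<inter> (V - {v}) = sg}"
    then have "Y \<subseteq> V" "Y - {v} = sg" by auto
    then show "Y \<in> {sg, insert v sg}" by (cases "v \<in> Y") auto
  next
    fix Y assume "Y \<in> {sg, insert v sg}"
    then show "Y \<in> {Y \<in> Pow V. Y \<inter> (V - {v}) = sg}" using assms by auto
  qed
  moreover have "sg \<noteq> insert v sg" using assms by auto
  ultimately show ?thesis unfolding pin_mass_def by simp
qed

lemma marg1_cond:
  assumes "v \<in> V" "sg \<subseteq> V - {v}"
  shows "marg1 V (cond V mu (V - {v}) sg) v = mu (insert v sg) / (mu sg + mu (insert v sg))"
proof -
  have "marg1 V (cond V mu (V - {v}) sg) v = (\<Sum>Y\<in>{insert v sg}. cond V mu (V - {v}) sg Y)"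
    unfolding marg1_def
  proof (intro sum.mono_neutral_cong_right)
    show "finite {Y \<in> Pow V. v \<in> Y}" using finV by simp
    show "{insert v sg} \<subseteq> {Y \<in> Pow V. v \<in> Y}" using assms by auto
    show "\<forall>Y\<in>{Y \<in> Pow V. v \<in> Y} - {insert v sg}. cond V mu (V - {v}) sg Y = 0"
      unfolding cond_def by auto
  qed auto
  also have "\<dots> = mu (insert v sg) / (mu sg + mu (insert v sg))"
    using assms pm_eq[OF assms] unfolding cond_def by auto
  finally show ?thesis .
qed

lemma cross:
  assumes X: "X \<in> Om" and Y: "Y \<in> Om" and XY: "X \<subseteq> Y" and v: "v \<in> V"
  shows "mu (insert v X) * mu (Y - {v}) \<le> mu (X - {v}) * mu (insert v Y)"
proof -
  let ?sg = "X - {v}" and ?tu = "Y - {v}"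
  have sub: "?sg \<subseteq> V - {v}" "?tu \<subseteq> V - {v}" using X Y Om_sub by auto
  have ins: "insert v ?sg = insert v X" "insert v ?tu = insert v Y" by auto
  have posX: "mu ?sg + mu (insert v X) > 0"
  proof (cases "v \<in> X")
    case True then have "insert v X = X" by auto
    then show ?thesis using X mu_nonneg[of ?sg] unfolding Om_def by auto
  next
    case False then have "?sg = X" by auto
    then show ?thesis using X mu_nonneg[of "insert v X"] unfolding Om_def by auto
  qed
  have posY: "mu ?tu + mu (insert v Y) > 0"
  proof (cases "v \<in> Y")
    case True then have "insert v Y = Y" by auto
    then show ?thesis using Y mu_nonneg[of ?tu] unfolding Om_def by auto
  next
    case False then have "?tu = Y" by auto
    then show ?thesis using Y mu_nonneg[of "insert v Y"] unfolding Om_def by auto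
  qed
  have f1: "feasible V mu (V - {v}) ?sg" unfolding feasible_def using sub pm_eq[OF v sub(1)] posX ins by auto
  have f2: "feasible V mu (V - {v}) ?tu" unfolding feasible_def using sub pm_eq[OF v sub(2)] posY ins by auto
  have "marg1 V (cond V mu (V - {v}) ?sg) v \<le> marg1 V (cond V mu (V - {v}) ?tu) v"
  proof -
    have sgtu: "?sg \<subseteq> ?tu" using XY by auto
    show ?thesis
      using mon[unfolded monotone_system_def, rule_format, OF v, of ?sg ?tu] sgtu f1 f2 by blast
  qed
  then have "mu (insert v X) / (mu ?sg + mu (insert v X)) \<le> mu (insert v Y) / (mu ?tu + mu (insert v Y))"
    using marg1_cond[OF v sub(1)] marg1_cond[OF v sub(2)] ins by simp
  then have "mu (insert v X) * (mu ?tu + mu (insert v Y)) \<le> mu (insert v Y) * (mu ?sg + mu (insert v X))"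
    using posX posY by (simp add: divide_simps)
  then show ?thesis by (simp add: algebra_simps)
qed

end

lemma inj_split: "inj_on (\<lambda>(R, T). R \<union> T) (Pow X \<times> Pow (Y - X))"
proof (rule inj_onI)
  fix p q assume p: "p \<in> Pow X \<times> Pow (Y - X)" and q: "q \<in> Pow X \<times> Pow (Y - X)"
    and e: "(\<lambda>(R, T). R \<union> T) p = (\<lambda>(R, T). R \<union> T) q"
  obtain R T where pe: "p = (R, T)" by (cases p)
  obtain R' T' where qe: "q = (R', T')" by (cases q)
  have u: "R \<union> T = R' \<union> T'" using e pe qe by simp
  have "R = (R \<union> T) \<inter> X" "T = (R \<union> T) - X" using p pe by auto
  moreover have "R' = (R' \<union> T') \<inter> X" "T' = (R' \<union> T') - X" using q qe by auto
  ultimately show "p = q" using u pe qe by metis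
qed
lemma img_split: "X \<subseteq> Y \<Longrightarrow> (\<lambda>(R, T). R \<union> T) ` (Pow X \<times> Pow (Y - X)) = Pow Y"
proof (intro set_eqI iffI)
  fix S assume "S \<in> Pow Y"
  then have "S = (\<lambda>(R, T). R \<union> T) (S \<inter> X, S - X)" "(S \<inter> X, S - X) \<in> Pow X \<times> Pow (Y - X)" by auto
  then show "S \<in> (\<lambda>(R, T). R \<union> T) ` (Pow X \<times> Pow (Y - X))" by (rule image_eqI)
next
  fix S assume "X \<subseteq> Y" "S \<in> (\<lambda>(R, T). R \<union> T) ` (Pow X \<times> Pow (Y - X))"
  then show "S \<in> Pow Y" by auto
qed
lemma pow_split_sum:
  assumes fin: "finite Y" and XY: "X \<subseteq> Y"
  shows "(\<Sum>S\<in>Pow Y. F S) = (\<Sum>R\<in>Pow X. \<Sum>T\<in>Pow (Y - X). F (R \<union> T))"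
proof -
  note inj = inj_split[of X Y] and img = img_split[OF XY]
  have "(\<Sum>S\<in>Pow Y. F S) = (\<Sum>p\<in>Pow X \<times> Pow (Y - X). F ((\<lambda>(R, T). R \<union> T) p))"
    by (subst img[symmetric], subst sum.reindex[OF inj]) (simp add: comp_def)
  also have "\<dots> = (\<Sum>(R, T)\<in>Pow X \<times> Pow (Y - X). F (R \<union> T))"
    by (intro sum.cong refl) (auto split: prod.split)
  also have "\<dots> = (\<Sum>R\<in>Pow X. \<Sum>T\<in>Pow (Y - X). F (R \<union> T))"
    by (rule sum.cartesian_product[symmetric])
  finally show ?thesis .
qed

context msys
begin

lemma inDD: "X \<subseteq> V \<Longrightarrow> mu X > 0 \<Longrightarrow> R \<subseteq> X \<Longrightarrow> (X, R) \<in> DD"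
  unfolding DD_def Om_def by auto

lemma DD_D: "(X, R) \<in> DD \<Longrightarrow> X \<subseteq> V \<and> mu X > 0 \<and> R \<subseteq> X"
  unfolding DD_def Om_def by auto

lemma class_sum:
  assumes "finite C" "\<And>u. u \<in> DD \<Longrightarrow> E s u \<longleftrightarrow> u \<in> C" "\<And>u. u \<in> C \<Longrightarrow> u \<notin> DD \<Longrightarrow> pi2 u = 0"
  shows "(\<Sum>u\<in>{u\<in>DD. E s u}. pi2 u * F u) = (\<Sum>u\<in>C. pi2 u * F u)"
proof -
  have "{u\<in>DD. E s u} = C \<inter> DD" using assms(2) by auto
  then show ?thesis using assms by (intro sum.mono_neutral_left) auto
qed

lemma app_cand:
  assumes "finite C" "\<And>u. u \<in> DD \<Longrightarrow> E s u \<longleftrightarrow> u \<in> C" "\<And>u. u \<in> C \<Longrightarrow> u \<notin> DD \<Longrightarrow> pi2 u = 0"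
  shows "K.app (K.hb E) g s = (\<Sum>u\<in>C. pi2 u * g u) / (\<Sum>u\<in>C. pi2 u)"
  unfolding K.app_hb using class_sum[where E=E and s=s and C=C, OF assms, of g]
    class_sum[where E=E and s=s and C=C, OF assms, of "\<lambda>_. 1"] by simp

lemma wt_ins: "finite X \<Longrightarrow> v \<notin> R \<Longrightarrow> wt (insert v X) R = theta * wt (X - {v}) R"
proof -
  assume fin: "finite X" and vR: "v \<notin> R"
  have "insert v X - R = insert v ((X - {v}) - R)" using vR by auto
  moreover have "v \<notin> (X - {v}) - R" by auto
  ultimately have "card (insert v X - R) = Suc (card ((X - {v}) - R))" using fin by simp
  then show ?thesis unfolding wt_def by simp
qed

lemma wt_ins2: "finite X \<Longrightarrow> R \<subseteq> X \<Longrightarrow> wt (insert v X) (insert v R) = (1 - theta) * wt (X - {v}) (R - {v})"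
proof -
  assume fin: "finite X" and RX: "R \<subseteq> X"
  have fR: "finite R" using fin RX finite_subset by blast
  have "card (insert v R) = Suc (card (R - {v}))" using fR by (simp add: card.insert_remove)
  moreover have "insert v X - insert v R = (X - {v}) - (R - {v})" by auto
  ultimately show ?thesis unfolding wt_def by simp
qed

lemma app_EF:
  assumes s: "(X, R) \<in> DD"
  shows "K.app (K.hb EF) g (X, R) = (\<Sum>R'\<in>Pow X. wt X R' * g (X, R'))"
proof -
  have D: "X \<subseteq> V" "mu X > 0" "R \<subseteq> X" using DD_D[OF s] by auto
  have finX: "finite X" using D finV finite_subset by blast
  let ?C = "(\<lambda>R'. (X, R')) ` Pow X"
  have inj: "inj_on (\<lambda>R'. (X, R')) (Pow X)" by (auto simp: inj_on_def)
  have a: "K.app (K.hb EF) g (X, R) = (\<Sum>u\<in>?C. pi2 u * g u) / (\<Sum>u\<in>?C. pi2 u)"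
  proof (rule app_cand)
    show "finite ?C" using finX by simp
    fix u assume "u \<in> DD" then show "EF (X, R) u \<longleftrightarrow> u \<in> ?C"
      unfolding EF_def DD_def by (cases u) auto
  next
    fix u assume "u \<in> ?C" "u \<notin> DD" then show "pi2 u = 0" using D inDD by auto
  qed
  have b: "(\<Sum>u\<in>?C. pi2 u * g u) = mu X * (\<Sum>R'\<in>Pow X. wt X R' * g (X, R'))"
    by (subst sum.reindex[OF inj]) (auto simp: pi2_def sum_distrib_left mult_ac intro!: sum.cong)
  have c: "(\<Sum>u\<in>?C. pi2 u) = mu X"
    by (subst sum.reindex[OF inj]) (auto simp: pi2_def sum_distrib_left[symmetric] wt_sum[OF finX]
        intro!: trans[OF sum.cong[OF refl]])
  show ?thesis using a b c D by simp
qed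

lemma wt_split:
  assumes fin: "finite Y" "X \<subseteq> Y" "R \<subseteq> X" "T \<subseteq> Y - X"
  shows "wt Y (R \<union> T) = wt X R * wt (Y - X) T"
proof -
  have fX: "finite X" using fin finite_subset by blast
  have fR: "finite R" "finite T" using fin fX finite_subset by blast+
  have "card (R \<union> T) = card R + card T" using fR assms by (intro card_Un_disjoint) auto
  moreover have "Y - (R \<union> T) = (X - R) \<union> ((Y - X) - T)" using assms by auto
  moreover have "card ((X - R) \<union> ((Y - X) - T)) = card (X - R) + card ((Y - X) - T)"
    using fin fX by (intro card_Un_disjoint) auto
  ultimately show ?thesis unfolding wt_def by (simp add: power_add mult_ac)
qed

lemma mono_EF: "K.monok (K.hb EF)"
  unfolding K.monok_def K.inc_def
proof (intro allI impI ballI)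
  fix g :: "'v set \<times> 'v set \<Rightarrow> real" and s t assume g: "\<forall>s\<in>DD. \<forall>t\<in>DD. le2 s t \<longrightarrow> g s \<le> g t" and s: "s \<in> DD" and t: "t \<in> DD"
    and st: "le2 s t"
  have gle: "\<And>p q. p \<in> DD \<Longrightarrow> q \<in> DD \<Longrightarrow> le2 p q \<Longrightarrow> g p \<le> g q" using g by blast
  obtain X R Y S where e: "s = (X, R)" "t = (Y, S)" by (cases s, cases t) auto
  have Ds: "X \<subseteq> V" "mu X > 0" "R \<subseteq> X" using DD_D s e by auto
  have Dt: "Y \<subseteq> V" "mu Y > 0" "S \<subseteq> Y" using DD_D t e by auto
  have XY: "X \<subseteq> Y" using st e unfolding le2_def by auto
  have fY: "finite Y" using Dt finV finite_subset by blast
  have fYX: "finite (Y - X)" using fY by simp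
  have "K.app (K.hb EF) g s = (\<Sum>R'\<in>Pow X. wt X R' * g (X, R'))" using app_EF s e by simp
  also have "\<dots> = (\<Sum>R'\<in>Pow X. \<Sum>T\<in>Pow (Y - X). wt X R' * wt (Y - X) T * g (X, R'))"
    by (simp add: sum_distrib_left[symmetric] sum_distrib_right[symmetric] wt_sum[OF fYX] mult_ac)
  also have "\<dots> \<le> (\<Sum>R'\<in>Pow X. \<Sum>T\<in>Pow (Y - X). wt X R' * wt (Y - X) T * g (Y, R' \<union> T))"
  proof (intro sum_mono mult_left_mono)
    fix R' T assume R': "R' \<in> Pow X" and T: "T \<in> Pow (Y - X)"
    have "(X, R') \<in> DD" using Ds R' inDD by auto
    moreover have "(Y, R' \<union> T) \<in> DD" using Dt R' T XY by (intro inDD) auto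
    moreover have "le2 (X, R') (Y, R' \<union> T)" using XY unfolding le2_def by auto
    ultimately show "g (X, R') \<le> g (Y, R' \<union> T)" using g by blast
    show "0 \<le> wt X R' * wt (Y - X) T" using wt_pos by (simp add: less_imp_le)
  qed
  also have "\<dots> = (\<Sum>S'\<in>Pow Y. wt Y S' * g (Y, S'))"
    using pow_split_sum[OF fY XY, of "\<lambda>S'. wt Y S' * g (Y, S')"] wt_split[OF fY XY] by simp
  also have "\<dots> = K.app (K.hb EF) g t" using app_EF t e by simp
  finally show "K.app (K.hb EF) g s \<le> K.app (K.hb EF) g t" .
qed

lemma diff_single_cases: "A - {v} = B - {v} \<Longrightarrow> A = B - {v} \<or> A = insert v B"
  by blast

lemma pi2_zero_notDD: "fst u \<subseteq> V \<Longrightarrow> u \<notin> DD \<Longrightarrow> pi2 u = 0"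
  using pi2_DD by blast

lemma app_EJ:
  assumes v: "v \<in> V" and s: "(X, R) \<in> DD"
  shows "K.app (K.hb (EJ v)) g (X, R) =
    (pi2 (X - {v}, R) * g (X - {v}, R) + pi2 (insert v X, R) * g (insert v X, R))
      / (pi2 (X - {v}, R) + pi2 (insert v X, R))"
proof -
  have D: "X \<subseteq> V" "mu X > 0" "R \<subseteq> X" using DD_D[OF s] by auto
  let ?C = "{(X - {v}, R), (insert v X, R)}"
  have ne: "(X - {v}, R) \<notin> {(insert v X, R)}" by auto
  have "K.app (K.hb (EJ v)) g (X, R) = (\<Sum>u\<in>?C. pi2 u * g u) / (\<Sum>u\<in>?C. pi2 u)"
  proof (rule app_cand)
    show "finite ?C" by simp
  next
    fix u assume "u \<in> DD"
    obtain X' R' where u: "u = (X', R')" by (cases u) auto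
    show "EJ v (X, R) u \<longleftrightarrow> u \<in> ?C"
    proof
      assume "EJ v (X, R) u"
      then have "R' = R" "X' - {v} = X - {v}" unfolding EJ_def u by auto
      then show "u \<in> ?C" using diff_single_cases[of X' v X] u by auto
    next
      assume "u \<in> ?C" then show "EJ v (X, R) u" unfolding EJ_def by auto
    qed
  next
    fix u assume "u \<in> ?C" "u \<notin> DD"
    then show "pi2 u = 0" using D v by (intro pi2_zero_notDD) auto
  qed
  then show ?thesis using ne by simp
qed

lemma mono_EJ:
  assumes v: "v \<in> V"
  shows "K.monok (K.hb (EJ v))"
  unfolding K.monok_def K.inc_def
proof (intro allI impI ballI)
  fix g :: "'v set \<times> 'v set \<Rightarrow> real" and s t
  assume g: "\<forall>s\<in>DD. \<forall>t\<in>DD. le2 s t \<longrightarrow> g s \<le> g t" and s: "s \<in> DD" and t: "t \<in> DD"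
    and st: "le2 s t"
  have gle: "\<And>p q. p \<in> DD \<Longrightarrow> q \<in> DD \<Longrightarrow> le2 p q \<Longrightarrow> g p \<le> g q" using g by blast
  obtain X R Y S where e: "s = (X, R)" "t = (Y, S)" by (cases s, cases t) auto
  have Ds: "X \<subseteq> V" "mu X > 0" "R \<subseteq> X" using DD_D s e by auto
  have Dt: "Y \<subseteq> V" "mu Y > 0" "S \<subseteq> Y" using DD_D t e by auto
  have XY: "X \<subseteq> Y" and RS: "R \<subseteq> S" using st e unfolding le2_def by auto
  have fX: "finite X" "finite Y" using Ds Dt finV finite_subset by blast+
  define a0 where "a0 = pi2 (X - {v}, R)"
  define a1 where "a1 = pi2 (insert v X, R)"
  define b0 where "b0 = pi2 (Y - {v}, S)"
  define b1 where "b1 = pi2 (insert v Y, S)"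
  have nn: "a0 \<ge> 0" "a1 \<ge> 0" "b0 \<ge> 0" "b1 \<ge> 0" unfolding a0_def a1_def b0_def b1_def
    using pi2_nonneg by auto
  have ps: "pi2 (X, R) > 0" "pi2 (Y, S) > 0" using pi2_pos s t e by auto
  have a01: "a0 + a1 > 0"
  proof (cases "v \<in> X")
    case True then have "insert v X = X" by auto
    then show ?thesis using ps nn unfolding a1_def by simp
  next
    case False then have "X - {v} = X" by auto
    then show ?thesis using ps nn unfolding a0_def by simp
  qed
  have b01: "b0 + b1 > 0"
  proof (cases "v \<in> Y")
    case True then have "insert v Y = Y" by auto
    then show ?thesis using ps nn unfolding b1_def by simp
  next
    case False then have "Y - {v} = Y" by auto
    then show ?thesis using ps nn unfolding b0_def by simp
  qed
  have crs: "a1 * b0 \<le> a0 * b1"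
  proof (cases "v \<in> S")
    case True
    then have "b0 = 0" unfolding b0_def pi2_def by auto
    then show ?thesis using nn by simp
  next
    case False
    then have vR: "v \<notin> R" using RS by auto
    have XO: "X \<in> Om" "Y \<in> Om" using Ds Dt unfolding Om_def by auto
    have A0: "a0 = mu (X - {v}) * wt (X - {v}) R" unfolding a0_def pi2_def using vR Ds by auto
    have A1: "a1 = mu (insert v X) * (theta * wt (X - {v}) R)"
      unfolding a1_def pi2_def using vR Ds wt_ins[OF fX(1) vR] by auto
    have B0: "b0 = mu (Y - {v}) * wt (Y - {v}) S" unfolding b0_def pi2_def using False Dt by auto
    have B1: "b1 = mu (insert v Y) * (theta * wt (Y - {v}) S)"
      unfolding b1_def pi2_def using False Dt wt_ins[OF fX(2) False] by auto
    have nz: "theta * wt (X - {v}) R * wt (Y - {v}) S \<ge> 0" using th0 wt_pos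
      by (simp add: less_imp_le)
    have eq1: "a1 * b0 = (mu (insert v X) * mu (Y - {v})) * (theta * wt (X - {v}) R * wt (Y - {v}) S)"
      unfolding A1 B0 by (simp only: mult_ac)
    have eq2: "a0 * b1 = (mu (X - {v}) * mu (insert v Y)) * (theta * wt (X - {v}) R * wt (Y - {v}) S)"
      unfolding A0 B1 by (simp only: mult_ac)
    show ?thesis unfolding eq1 eq2 by (rule mult_right_mono[OF cross[OF XO XY v] nz])
  qed
  have inD: "c \<in> DD" if "fst c \<subseteq> V" "pi2 c > 0" for c using pi2_DD that by auto
  have c1: "g (X - {v}, R) \<le> g (Y - {v}, S)" if "a0 > 0" "b0 > 0"
  proof -
    have i: "(X - {v}, R) \<in> DD" "(Y - {v}, S) \<in> DD"
      by (rule inD, use that Ds Dt in \<open>auto simp: a0_def b0_def\<close>)+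
    have "le2 (X - {v}, R) (Y - {v}, S)" using XY RS unfolding le2_def by auto
    then show ?thesis using gle i by blast
  qed
  have c2: "g (insert v X, R) \<le> g (insert v Y, S)" if "a1 > 0" "b1 > 0"
  proof -
    have i: "(insert v X, R) \<in> DD" "(insert v Y, S) \<in> DD"
      by (rule inD, use that Ds Dt v in \<open>auto simp: a1_def b1_def\<close>)+
    show ?thesis by (rule gle[OF i]) (use XY RS in \<open>auto simp: le2_def\<close>)
  qed
  have c3: "g (X - {v}, R) \<le> g (insert v Y, S)" if "a0 > 0" "b1 > 0"
  proof -
    have i: "(X - {v}, R) \<in> DD" "(insert v Y, S) \<in> DD"
      by (rule inD, use that Ds Dt v in \<open>auto simp: a0_def b1_def\<close>)+
    show ?thesis by (rule gle[OF i]) (use XY RS in \<open>auto simp: le2_def\<close>)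
  qed
  have "(a0 * g (X - {v}, R) + a1 * g (insert v X, R)) / (a0 + a1)
      \<le> (b0 * g (Y - {v}, S) + b1 * g (insert v Y, S)) / (b0 + b1)"
    by (rule two_point[OF nn a01 b01 crs c1 c2 c3])
  then show "K.app (K.hb (EJ v)) g s \<le> K.app (K.hb (EJ v)) g t"
    unfolding e app_EJ[OF v s[unfolded e]] app_EJ[OF v t[unfolded e]] a0_def a1_def b0_def b1_def .
qed

lemma app_EB:
  assumes v: "v \<in> V" and s: "(X, R) \<in> DD"
  shows "K.app (K.hb (EB v)) g (X, R) =
    (mu (X - {v}) * g (X - {v}, R - {v}) + mu (insert v X) * (theta * g (insert v X, R - {v})
       + (1 - theta) * g (insert v X, insert v R))) / (mu (X - {v}) + mu (insert v X))"
proof -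
  have D: "X \<subseteq> V" "mu X > 0" "R \<subseteq> X" using DD_D[OF s] by auto
  have fX: "finite X" using D finV finite_subset by blast
  define c0 where "c0 = (X - {v}, R - {v})"
  define c1 where "c1 = (insert v X, R - {v})"
  define c2 where "c2 = (insert v X, insert v R)"
  let ?C = "{c0, c1, c2}"
  have ne: "c0 \<notin> {c1, c2}" "c1 \<notin> {c2}" unfolding c0_def c1_def c2_def by auto
  have "K.app (K.hb (EB v)) g (X, R) = (\<Sum>u\<in>?C. pi2 u * g u) / (\<Sum>u\<in>?C. pi2 u)"
  proof (rule app_cand)
    show "finite ?C" by simp
  next
    fix u assume u0: "u \<in> DD"
    obtain X' R' where u: "u = (X', R')" by (cases u) auto
    have R'X': "R' \<subseteq> X'" using u0 u DD_D by auto
    show "EB v (X, R) u \<longleftrightarrow> u \<in> ?C"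
    proof
      assume "EB v (X, R) u"
      then have e1: "X' - {v} = X - {v}" and e2: "R' - {v} = R - {v}" unfolding EB_def u by auto
      show "u \<in> ?C"
      proof (cases "v \<in> X'")
        case True
        then have "X' = insert v X" using diff_single_cases[OF e1] by auto
        moreover have "R' = R - {v} \<or> R' = insert v R" using diff_single_cases[OF e2] by auto
        ultimately show ?thesis unfolding u c1_def c2_def by auto
      next
        case False
        then have "X' = X - {v}" using diff_single_cases[OF e1] by auto
        moreover have "v \<notin> R'" using False R'X' by auto
        then have "R' = R - {v}" using diff_single_cases[OF e2] by auto
        ultimately show ?thesis unfolding u c0_def by auto
      qed
    next
      assume "u \<in> ?C" then show "EB v (X, R) u" unfolding EB_def c0_def c1_def c2_def by auto
    qed
  next
    fix u assume "u \<in> ?C" "u \<notin> DD"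
    then show "pi2 u = 0" using D v unfolding c0_def c1_def c2_def by (intro pi2_zero_notDD) auto
  qed
  also have "\<dots> = (pi2 c0 * g c0 + pi2 c1 * g c1 + pi2 c2 * g c2) / (pi2 c0 + pi2 c1 + pi2 c2)"
    using ne by (simp add: add.assoc)
  also have "\<dots> = (mu (X - {v}) * g c0 + mu (insert v X) * (theta * g c1 + (1 - theta) * g c2))
      / (mu (X - {v}) + mu (insert v X))"
  proof -
    define w0 where "w0 = wt (X - {v}) (R - {v})"
    have w0: "w0 > 0" unfolding w0_def using wt_pos by simp
    have p0: "pi2 c0 = mu (X - {v}) * w0" unfolding c0_def pi2_def w0_def using D by auto
    have p1: "pi2 c1 = mu (insert v X) * (theta * w0)" unfolding c1_def pi2_def w0_def
      using D wt_ins[OF fX, of v "R - {v}"] by auto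
    have p2: "pi2 c2 = mu (insert v X) * ((1 - theta) * w0)" unfolding c2_def pi2_def w0_def
      using D wt_ins2[OF fX D(3), of v] by auto
    have n: "pi2 c0 * g c0 + pi2 c1 * g c1 + pi2 c2 * g c2
        = w0 * (mu (X - {v}) * g c0 + mu (insert v X) * (theta * g c1 + (1 - theta) * g c2))"
      unfolding p0 p1 p2 by (simp add: algebra_simps)
    have d: "pi2 c0 + pi2 c1 + pi2 c2 = w0 * (mu (X - {v}) + mu (insert v X))"
      unfolding p0 p1 p2 by (simp add: algebra_simps)
    show ?thesis unfolding n d using w0 by simp
  qed
  finally show ?thesis unfolding c0_def c1_def c2_def .
qed

lemma mono_EB:
  assumes v: "v \<in> V"
  shows "K.monok (K.hb (EB v))"
  unfolding K.monok_def K.inc_def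
proof (intro allI impI ballI)
  fix g :: "'v set \<times> 'v set \<Rightarrow> real" and s t
  assume g: "\<forall>s\<in>DD. \<forall>t\<in>DD. le2 s t \<longrightarrow> g s \<le> g t" and s: "s \<in> DD" and t: "t \<in> DD"
    and st: "le2 s t"
  have gle: "\<And>p q. p \<in> DD \<Longrightarrow> q \<in> DD \<Longrightarrow> le2 p q \<Longrightarrow> g p \<le> g q" using g by blast
  obtain X R Y S where e: "s = (X, R)" "t = (Y, S)" by (cases s, cases t) auto
  have Ds: "X \<subseteq> V" "mu X > 0" "R \<subseteq> X" using DD_D s e by auto
  have Dt: "Y \<subseteq> V" "mu Y > 0" "S \<subseteq> Y" using DD_D t e by auto
  have XY: "X \<subseteq> Y" and RS: "R \<subseteq> S" using st e unfolding le2_def by auto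
  have XO: "X \<in> Om" "Y \<in> Om" using Ds Dt unfolding Om_def by auto
  define a0 where "a0 = mu (X - {v})"
  define a1 where "a1 = mu (insert v X)"
  define b0 where "b0 = mu (Y - {v})"
  define b1 where "b1 = mu (insert v Y)"
  have nn: "a0 \<ge> 0" "a1 \<ge> 0" "b0 \<ge> 0" "b1 \<ge> 0" unfolding a0_def a1_def b0_def b1_def
    using mu_nonneg by auto
  have a01: "a0 + a1 > 0"
  proof (cases "v \<in> X")
    case True then have "insert v X = X" by auto
    then show ?thesis using Ds nn unfolding a1_def by simp
  next
    case False then have "X - {v} = X" by auto
    then show ?thesis using Ds nn unfolding a0_def by simp
  qed
  have b01: "b0 + b1 > 0"
  proof (cases "v \<in> Y")
    case True then have "insert v Y = Y" by auto
    then show ?thesis using Dt nn unfolding b1_def by simp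
  next
    case False then have "Y - {v} = Y" by auto
    then show ?thesis using Dt nn unfolding b0_def by simp
  qed
  have crs: "a1 * b0 \<le> a0 * b1" unfolding a0_def a1_def b0_def b1_def using cross[OF XO XY v] .
  let ?x1 = "theta * g (insert v X, R - {v}) + (1 - theta) * g (insert v X, insert v R)"
  let ?y1 = "theta * g (insert v Y, S - {v}) + (1 - theta) * g (insert v Y, insert v S)"
  have th: "theta \<ge> 0" "1 - theta \<ge> 0" using th0 th1 by auto
  have c1: "g (X - {v}, R - {v}) \<le> g (Y - {v}, S - {v})" if "a0 > 0" "b0 > 0"
  proof -
    have i: "(X - {v}, R - {v}) \<in> DD" "(Y - {v}, S - {v}) \<in> DD"
      using that Ds Dt unfolding a0_def b0_def by (auto intro!: inDD)
    have "le2 (X - {v}, R - {v}) (Y - {v}, S - {v})" using XY RS unfolding le2_def by auto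
    then show ?thesis using gle i by blast
  qed
  have c2: "?x1 \<le> ?y1" if "a1 > 0" "b1 > 0"
  proof -
    have i: "(insert v X, R - {v}) \<in> DD" "(insert v X, insert v R) \<in> DD"
      "(insert v Y, S - {v}) \<in> DD" "(insert v Y, insert v S) \<in> DD"
      using that Ds Dt v unfolding a1_def b1_def by (auto intro!: inDD)
    have "g (insert v X, R - {v}) \<le> g (insert v Y, S - {v})"
      by (rule gle) (use i XY RS in \<open>auto simp: le2_def\<close>)
    moreover have "g (insert v X, insert v R) \<le> g (insert v Y, insert v S)"
      by (rule gle) (use i XY RS in \<open>auto simp: le2_def\<close>)
    ultimately show ?thesis using th by (intro add_mono mult_left_mono) auto
  qed
  have c3: "g (X - {v}, R - {v}) \<le> ?y1" if "a0 > 0" "b1 > 0"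
  proof -
    have i: "(X - {v}, R - {v}) \<in> DD"
      "(insert v Y, S - {v}) \<in> DD" "(insert v Y, insert v S) \<in> DD"
      using that Ds Dt v unfolding a0_def b1_def by (auto intro!: inDD)
    have "g (X - {v}, R - {v}) \<le> g (insert v Y, S - {v})"
      by (rule gle) (use i XY RS in \<open>auto simp: le2_def\<close>)
    moreover have "g (X - {v}, R - {v}) \<le> g (insert v Y, insert v S)"
      by (rule gle) (use i XY RS in \<open>auto simp: le2_def\<close>)
    ultimately have "theta * g (X - {v}, R - {v}) + (1 - theta) * g (X - {v}, R - {v}) \<le> ?y1"
      using th by (intro add_mono mult_left_mono) auto
    then show ?thesis by (simp add: algebra_simps)
  qed
  have "(a0 * g (X - {v}, R - {v}) + a1 * ?x1) / (a0 + a1) \<le> (b0 * g (Y - {v}, S - {v}) + b1 * ?y1) / (b0 + b1)"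
    by (rule two_point[OF nn a01 b01 crs c1 c2 c3])
  then show "K.app (K.hb (EB v)) g s \<le> K.app (K.hb (EB v)) g t"
    unfolding e app_EB[OF v s[unfolded e]] app_EB[OF v t[unfolded e]] a0_def a1_def b0_def b1_def .
qed

end

context msys
begin

definition Rf where "Rf = K.hb EF"
definition Bk where "Bk = (\<lambda>v. K.hb (EB v))"
definition Jk where "Jk = (\<lambda>v. K.hb (EJ v))"
definition P2 where "P2 = K.avgk V Bk"
definition G2 where "G2 = K.avgk V Jk"

lemma rev_Rf: "K.revk Rf" unfolding Rf_def by (rule K.hb_rev[OF equiv_EF])
lemma mono_Rf: "K.monok Rf" unfolding Rf_def by (rule mono_EF)
lemma rev_P2: "K.revk P2" unfolding P2_def Bk_def by (intro K.revk_avg K.hb_rev equiv_EB)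
lemma mono_P2: "K.monok P2" unfolding P2_def Bk_def by (intro K.monok_avg mono_EB)
lemma mono_G2: "K.monok G2" unfolding G2_def Jk_def by (intro K.monok_avg mono_EJ)

lemma censor_P2:
  assumes p: "K.dens p"
  shows "K.dom (K.push P2 p) (K.push G2 p)"
  unfolding K.dom_def P2_def G2_def
proof (intro allI impI)
  fix g assume g: "K.inc g"
  have "K.ip (K.push (Bk v) p) g \<le> K.ip (K.push (Jk v) p) g" if v: "v \<in> V" for v
    unfolding Bk_def Jk_def
  proof (rule K.censor[where E="EB v" and E'="EJ v"])
    show "K.equivD (EB v)" by (rule equiv_EB)
    show "K.equivD (EJ v)" by (rule equiv_EJ)
    show "\<And>s t. s \<in> DD \<Longrightarrow> t \<in> DD \<Longrightarrow> EJ v s t \<Longrightarrow> EB v s t" by (rule EJ_EB)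
    show "\<And>s t. s \<in> DD \<Longrightarrow> t \<in> DD \<Longrightarrow> EB v s t \<Longrightarrow> le2 s t \<or> le2 t s" by (rule EB_chain)
    show "K.monok (K.hb (EJ v))" by (rule mono_EJ[OF v])
    show "K.dens p" by (rule p)
    show "K.inc g" by (rule g)
  qed
  then show "K.ip (K.push (K.avgk V Bk) p) g \<le> K.ip (K.push (K.avgk V Jk) p) g"
    by (rule K.censor_avg)
qed

lemma inv_P2:
  assumes "K.dens p" "K.dom p q"
  shows "K.dens ((K.push P2 ^^ i) p) \<and> K.dom ((K.push P2 ^^ i) p) ((K.push G2 ^^ i) q)"
proof (induction i)
  case 0 then show ?case using assms by simp
next
  case (Suc i)
  let ?p = "(K.push P2 ^^ i) p" and ?q = "(K.push G2 ^^ i) q"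
  have "K.dens (K.push P2 ?p)" using Suc K.dens_push[OF rev_P2 mono_P2] by blast
  moreover have "K.dom (K.push P2 ?p) (K.push G2 ?q)"
    using K.dom_trans[OF censor_P2 K.dom_push[OF mono_G2]] Suc by blast
  ultimately show ?case by simp
qed

definition roundF :: "nat \<Rightarrow> ('v set \<times> 'v set \<Rightarrow> real) \<Rightarrow> 'v set \<times> 'v set \<Rightarrow> real" where
  "roundF m p = (K.push P2 ^^ m) (K.push Rf p)"
definition roundC :: "nat \<Rightarrow> ('v set \<times> 'v set \<Rightarrow> real) \<Rightarrow> 'v set \<times> 'v set \<Rightarrow> real" where
  "roundC m p = (K.push G2 ^^ m) (K.push Rf p)"

lemma inv_Rf: "K.dens p \<Longrightarrow> K.dom p q \<Longrightarrow> K.dens (K.push Rf p) \<and> K.dom (K.push Rf p) (K.push Rf q)"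
  using K.dens_push[OF rev_Rf mono_Rf] K.dom_push[OF mono_Rf] by blast

lemma inv_round: "K.dens p \<Longrightarrow> K.dom p q \<Longrightarrow> K.dens (roundF m p) \<and> K.dom (roundF m p) (roundC m q)"
  unfolding roundF_def roundC_def using inv_Rf inv_P2 by blast

lemma inv_rounds:
  assumes "K.dens p" "K.dom p q"
  shows "K.dens ((roundF m ^^ j) p) \<and> K.dom ((roundF m ^^ j) p) ((roundC m ^^ j) q)"
proof (induction j)
  case 0 then show ?case using assms by simp
next
  case (Suc j) then show ?case using inv_round[of "(roundF m ^^ j) p" "(roundC m ^^ j) q" m] by simp
qed

definition delta2 :: "'v set \<times> 'v set \<Rightarrow> real" where
  "delta2 s = (if s = (V, V) then 1 else 0)"

lemma VV_DD: "(V, V) \<in> DD" using muV by (intro inDD) auto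

lemma dens_delta2: "K.dens delta2"
  unfolding delta2_def
proof (rule K.dens_delta)
  show "(V, V) \<in> DD" by (rule VV_DD)
  fix s assume "s \<in> DD" "le2 (V, V) s"
  then show "s = (V, V)" unfolding le2_def by (cases s) (auto dest!: DD_D)
qed

lemma joint_tv:
  "(\<Sum>s\<in>DD. \<bar>K.push Rf ((roundF m ^^ k) delta2) s - pi2 s\<bar>)
     \<le> (\<Sum>s\<in>DD. \<bar>K.push Rf ((roundC m ^^ k) delta2) s - pi2 s\<bar>)"
proof -
  have "K.dens ((roundF m ^^ k) delta2) \<and> K.dom ((roundF m ^^ k) delta2) ((roundC m ^^ k) delta2)"
    by (rule inv_rounds[OF dens_delta2 K.dom_refl])
  then have "K.dens (K.push Rf ((roundF m ^^ k) delta2)) \<and>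
      K.dom (K.push Rf ((roundF m ^^ k) delta2)) (K.push Rf ((roundC m ^^ k) delta2))"
    using inv_Rf by blast
  then show ?thesis using K.tv_compare by blast
qed

end

lemma pm_eq_gen:
  assumes "v \<in> V" "sg \<subseteq> V - {v}"
  shows "pin_mass V f (V - {v}) sg = f sg + f (insert v sg)"
proof -
  have "{Y \<in> Pow V. Y \<inter> (V - {v}) = sg} = {sg, insert v sg}"
  proof (intro set_eqI iffI)
    fix Y assume "Y \<in> {Y \<in> Pow V. Y \<inter> (V - {v}) = sg}"
    then have "Y \<subseteq> V" "Y - {v} = sg" by auto
    then show "Y \<in> {sg, insert v sg}" by (cases "v \<in> Y") auto
  next
    fix Y assume "Y \<in> {sg, insert v sg}"
    then show "Y \<in> {Y \<in> Pow V. Y \<inter> (V - {v}) = sg}" using assms by auto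
  qed
  moreover have "sg \<noteq> insert v sg" using assms by auto
  ultimately show ?thesis unfolding pin_mass_def by simp
qed

context msys
begin

definition margX :: "('v set \<times> 'v set \<Rightarrow> real) \<Rightarrow> 'v set \<Rightarrow> real" where
  "margX p X = (if X \<in> Om then (\<Sum>R\<in>Pow X. p (X, R)) else 0)"

lemma sum_DD: "(\<Sum>s\<in>DD. f s) = (\<Sum>X\<in>Om. \<Sum>R\<in>Pow X. f (X, R))"
  unfolding DD_def using finOm Om_sub finV
  by (subst sum.Sigma) (auto intro: finite_subset)

lemma classmass_EF:
  assumes s: "(X, R) \<in> DD"
  shows "(\<Sum>u\<in>{u\<in>DD. EF (X, R) u}. pi2 u) = mu X"
proof -
  have D: "X \<subseteq> V" "mu X > 0" "R \<subseteq> X" using DD_D[OF s] by auto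
  have finX: "finite X" using D finV finite_subset by blast
  let ?C = "(\<lambda>R'. (X, R')) ` Pow X"
  have inj: "inj_on (\<lambda>R'. (X, R')) (Pow X)" by (auto simp: inj_on_def)
  have "(\<Sum>u\<in>{u\<in>DD. EF (X, R) u}. pi2 u * 1) = (\<Sum>u\<in>?C. pi2 u * 1)"
  proof (rule class_sum)
    show "finite ?C" using finX by simp
    fix u assume "u \<in> DD" then show "EF (X, R) u \<longleftrightarrow> u \<in> ?C"
      unfolding EF_def DD_def by (cases u) auto
  next
    fix u assume "u \<in> ?C" "u \<notin> DD" then show "pi2 u = 0" using D inDD by auto
  qed
  also have "\<dots> = mu X"
    by (subst sum.reindex[OF inj]) (auto simp: pi2_def sum_distrib_left[symmetric] wt_sum[OF finX]
        intro!: trans[OF sum.cong[OF refl]])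
  finally show ?thesis by simp
qed

lemma push_Rf:
  assumes t: "(X', R') \<in> DD"
  shows "K.push Rf p (X', R') = (\<Sum>R\<in>Pow X'. p (X', R)) * wt X' R'"
proof -
  have D: "X' \<subseteq> V" "mu X' > 0" "R' \<subseteq> X'" using DD_D[OF t] by auto
  have hb: "K.hb EF s (X', R') = (if fst s = X' then wt X' R' else 0)" if s: "s \<in> DD" for s
  proof (cases "fst s = X'")
    case True
    obtain R where se: "s = (X', R)" using True by (cases s) auto
    show ?thesis using True classmass_EF[OF s[unfolded se]] t D unfolding K.hb_def EF_def se pi2_def
      by simp
  next
    case False then show ?thesis unfolding K.hb_def EF_def by auto
  qed
  have "K.push Rf p (X', R') = (\<Sum>X\<in>Om. \<Sum>R\<in>Pow X. p (X, R) * K.hb EF (X, R) (X', R'))"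
    unfolding K.push_def Rf_def by (rule sum_DD)
  also have "\<dots> = (\<Sum>X\<in>Om. if X = X' then (\<Sum>R\<in>Pow X. p (X, R) * wt X' R') else 0)"
  proof (intro sum.cong refl)
    fix X assume X: "X \<in> Om"
    have hbX: "K.hb EF (X, R) (X', R') = (if X = X' then wt X' R' else 0)" if "R \<in> Pow X" for R
      using hb[of "(X, R)"] X that unfolding DD_def by auto
    show "(\<Sum>R\<in>Pow X. p (X, R) * K.hb EF (X, R) (X', R')) =
      (if X = X' then \<Sum>R\<in>Pow X. p (X, R) * wt X' R' else 0)"
    proof (cases "X = X'")
      case True then show ?thesis using hbX by (auto intro!: sum.cong)
    next
      case False then show ?thesis using hbX by simp
    qed
  qed
  also have "\<dots> = (\<Sum>R\<in>Pow X'. p (X', R) * wt X' R')"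
    using D finOm by (simp add: Om_def)
  finally show ?thesis by (simp add: sum_distrib_right)
qed

lemma margX_Rf: "margX (K.push Rf p) X = margX p X"
proof (cases "X \<in> Om")
  case True
  have finX: "finite X" using True Om_sub finV finite_subset by blast
  have "margX (K.push Rf p) X = (\<Sum>R'\<in>Pow X. (\<Sum>R\<in>Pow X. p (X, R)) * wt X R')"
    unfolding margX_def using True push_Rf by (auto simp: DD_def intro!: sum.cong)
  also have "\<dots> = (\<Sum>R\<in>Pow X. p (X, R))" by (simp add: sum_distrib_left[symmetric] wt_sum[OF finX])
  finally show ?thesis unfolding margX_def using True by simp
qed (simp add: margX_def)

definition Kmu :: "'v \<Rightarrow> 'v set \<Rightarrow> 'v set \<Rightarrow> real" where
  "Kmu v X X' = (if X' - {v} = X - {v} then mu X' / (mu (X - {v}) + mu (insert v X)) else 0)"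

lemma class_EB:
  assumes s: "(X, R) \<in> DD" and u0: "u \<in> DD"
  shows "EB v (X, R) u \<longleftrightarrow> u \<in> {(X - {v}, R - {v}), (insert v X, R - {v}), (insert v X, insert v R)}"
proof -
  obtain X' R' where u: "u = (X', R')" by (cases u) auto
  have R'X': "R' \<subseteq> X'" using u0 u DD_D by auto
  show ?thesis
  proof
    assume "EB v (X, R) u"
    then have e1: "X' - {v} = X - {v}" and e2: "R' - {v} = R - {v}" unfolding EB_def u by auto
    show "u \<in> {(X - {v}, R - {v}), (insert v X, R - {v}), (insert v X, insert v R)}"
    proof (cases "v \<in> X'")
      case True
      then have "X' = insert v X" using diff_single_cases[OF e1] by auto
      moreover have "R' = R - {v} \<or> R' = insert v R" using diff_single_cases[OF e2] by auto
      ultimately show ?thesis unfolding u by auto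
    next
      case False
      then have "X' = X - {v}" using diff_single_cases[OF e1] by auto
      moreover have "v \<notin> R'" using False R'X' by auto
      then have "R' = R - {v}" using diff_single_cases[OF e2] by auto
      ultimately show ?thesis unfolding u by auto
    qed
  next
    assume "u \<in> {(X - {v}, R - {v}), (insert v X, R - {v}), (insert v X, insert v R)}"
    then show "EB v (X, R) u" unfolding EB_def by auto
  qed
qed

lemma pis_EB:
  assumes s: "(X, R) \<in> DD"
  shows "pi2 (X - {v}, R - {v}) = mu (X - {v}) * wt (X - {v}) (R - {v})"
    "pi2 (insert v X, R - {v}) = mu (insert v X) * (theta * wt (X - {v}) (R - {v}))"
    "pi2 (insert v X, insert v R) = mu (insert v X) * ((1 - theta) * wt (X - {v}) (R - {v}))"
proof -
  have D: "X \<subseteq> V" "mu X > 0" "R \<subseteq> X" using DD_D[OF s] by auto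
  have fX: "finite X" using D finV finite_subset by blast
  show "pi2 (X - {v}, R - {v}) = mu (X - {v}) * wt (X - {v}) (R - {v})" unfolding pi2_def using D by auto
  show "pi2 (insert v X, R - {v}) = mu (insert v X) * (theta * wt (X - {v}) (R - {v}))"
    unfolding pi2_def using D wt_ins[OF fX, of v "R - {v}"] by auto
  show "pi2 (insert v X, insert v R) = mu (insert v X) * ((1 - theta) * wt (X - {v}) (R - {v}))"
    unfolding pi2_def using D wt_ins2[OF fX D(3), of v] by auto
qed

lemma classmass_EB:
  assumes v: "v \<in> V" and s: "(X, R) \<in> DD"
  shows "(\<Sum>u\<in>{u\<in>DD. EB v (X, R) u}. pi2 u) = wt (X - {v}) (R - {v}) * (mu (X - {v}) + mu (insert v X))"
proof -
  have D: "X \<subseteq> V" "mu X > 0" "R \<subseteq> X" using DD_D[OF s] by auto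
  let ?C = "{(X - {v}, R - {v}), (insert v X, R - {v}), (insert v X, insert v R)}"
  have ne: "(X - {v}, R - {v}) \<notin> {(insert v X, R - {v}), (insert v X, insert v R)}"
    "(insert v X, R - {v}) \<notin> {(insert v X, insert v R)}" by auto
  have "(\<Sum>u\<in>{u\<in>DD. EB v (X, R) u}. pi2 u * 1) = (\<Sum>u\<in>?C. pi2 u * 1)"
  proof (rule class_sum)
    show "finite ?C" by simp
    show "\<And>u. u \<in> DD \<Longrightarrow> EB v (X, R) u = (u \<in> ?C)" using class_EB[OF s] by blast
    fix u assume "u \<in> ?C" "u \<notin> DD"
    then show "pi2 u = 0" using D v by (intro pi2_zero_notDD) auto
  qed
  also have "\<dots> = pi2 (X - {v}, R - {v}) + pi2 (insert v X, R - {v}) + pi2 (insert v X, insert v R)"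
    using ne by (simp add: add.assoc)
  also have "\<dots> = wt (X - {v}) (R - {v}) * (mu (X - {v}) + mu (insert v X))"
    unfolding pis_EB[OF s] by (simp add: algebra_simps)
  finally show ?thesis by simp
qed

lemma sumR_hb_EB:
  assumes v: "v \<in> V" and s: "(X, R) \<in> DD" and X': "X' \<in> Om"
  shows "(\<Sum>R'\<in>Pow X'. K.hb (EB v) (X, R) (X', R')) = Kmu v X X'"
proof -
  have D: "X \<subseteq> V" "mu X > 0" "R \<subseteq> X" using DD_D[OF s] by auto
  define M where "M = wt (X - {v}) (R - {v}) * (mu (X - {v}) + mu (insert v X))"
  define w0 where "w0 = wt (X - {v}) (R - {v})"
  have pos: "mu (X - {v}) + mu (insert v X) > 0"
  proof (cases "v \<in> X")
    case True then have "insert v X = X" by auto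
    then show ?thesis using D mu_nonneg[of "X - {v}"] by simp
  next
    case False then have "X - {v} = X" by auto
    then show ?thesis using D mu_nonneg[of "insert v X"] by simp
  qed
  have w0: "w0 > 0" unfolding w0_def using wt_pos by simp
  have M: "M = w0 * (mu (X - {v}) + mu (insert v X))" unfolding M_def w0_def by simp
  have hbv: "K.hb (EB v) (X, R) (X', R') = (if EB v (X, R) (X', R') then pi2 (X', R') / M else 0)"
    if "R' \<in> Pow X'" for R'
  proof -
    have "(X', R') \<in> DD" using X' that unfolding DD_def by auto
    then show ?thesis unfolding K.hb_def classmass_EB[OF v s] M_def by simp
  qed
  have ebv: "EB v (X, R) (X', R') \<longleftrightarrow> X' - {v} = X - {v} \<and> R' - {v} = R - {v}" for R'
    unfolding EB_def by auto
  show ?thesis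
  proof (cases "X' - {v} = X - {v}")
    case False
    then show ?thesis using hbv ebv unfolding Kmu_def by simp
  next
    case True
    show ?thesis
    proof (cases "v \<in> X'")
      case False
      then have X'e: "X' = X - {v}" using diff_single_cases[OF True] by auto
      have "(\<Sum>R'\<in>Pow X'. K.hb (EB v) (X, R) (X', R')) = (\<Sum>R'\<in>{R - {v}}. pi2 (X', R') / M)"
      proof (rule sum.mono_neutral_cong_right)
        show "finite (Pow X')" using X' Om_sub finV finite_subset by blast
        show "{R - {v}} \<subseteq> Pow X'" using X'e D by auto
        show "\<forall>R'\<in>Pow X' - {R - {v}}. K.hb (EB v) (X, R) (X', R') = 0"
        proof
          fix R' assume R': "R' \<in> Pow X' - {R - {v}}"
          then have "v \<notin> R'" using False by auto
          then have "R' - {v} \<noteq> R - {v}" using R' by auto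
          then show "K.hb (EB v) (X, R) (X', R') = 0" using hbv R' ebv by auto
        qed
        show "K.hb (EB v) (X, R) (X', R') = pi2 (X', R') / M" if "R' \<in> {R - {v}}" for R'
        proof -
          have "R' = R - {v}" "R' \<in> Pow X'" using that X'e D by auto
          then show ?thesis using hbv ebv True by simp
        qed
      qed
      also have "\<dots> = mu (X - {v}) * w0 / M" using pis_EB(1)[OF s, of v] X'e w0_def by simp
      also have "\<dots> = Kmu v X X'" unfolding Kmu_def M using True X'e w0 by simp
      finally show ?thesis .
    next
      case vX': True
      then have X'e: "X' = insert v X" using diff_single_cases[OF True] by auto
      have ne: "R - {v} \<notin> {insert v R}" by auto
      have "(\<Sum>R'\<in>Pow X'. K.hb (EB v) (X, R) (X', R')) = (\<Sum>R'\<in>{R - {v}, insert v R}. pi2 (X', R') / M)"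
      proof (rule sum.mono_neutral_cong_right)
        show "finite (Pow X')" using X' Om_sub finV finite_subset by blast
        show "{R - {v}, insert v R} \<subseteq> Pow X'" using X'e D by auto
        show "\<forall>R'\<in>Pow X' - {R - {v}, insert v R}. K.hb (EB v) (X, R) (X', R') = 0"
        proof
          fix R' assume R': "R' \<in> Pow X' - {R - {v}, insert v R}"
          then have "R' - {v} \<noteq> R - {v}" using diff_single_cases[of R' v R] by auto
          then show "K.hb (EB v) (X, R) (X', R') = 0" using hbv R' ebv by auto
        qed
        show "K.hb (EB v) (X, R) (X', R') = pi2 (X', R') / M" if "R' \<in> {R - {v}, insert v R}" for R'
        proof -
          have "R' - {v} = R - {v}" "R' \<in> Pow X'" using that X'e D by auto
          then show ?thesis using hbv ebv True by simp
        qed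
      qed
      also have "\<dots> = (pi2 (X', R - {v}) + pi2 (X', insert v R)) / M"
        using ne by (simp add: add_divide_distrib)
      also have "\<dots> = mu (insert v X) * w0 / M"
        unfolding X'e pis_EB[OF s, of v] w0_def[symmetric] by (simp add: algebra_simps)
      also have "\<dots> = Kmu v X X'" unfolding Kmu_def M using True X'e w0 by simp
      finally show ?thesis .
    qed
  qed
qed

lemma margX_Bk:
  assumes v: "v \<in> V" and X': "X' \<in> Om"
  shows "margX (K.push (Bk v) p) X' = (\<Sum>X\<in>Om. margX p X * Kmu v X X')"
proof -
  have "margX (K.push (Bk v) p) X' = (\<Sum>R'\<in>Pow X'. \<Sum>s\<in>DD. p s * K.hb (EB v) s (X', R'))"
    unfolding margX_def K.push_def Bk_def using X' by simp
  also have "\<dots> = (\<Sum>s\<in>DD. \<Sum>R'\<in>Pow X'. p s * K.hb (EB v) s (X', R'))"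
    by (rule sum.swap)
  also have "\<dots> = (\<Sum>X\<in>Om. \<Sum>R\<in>Pow X. \<Sum>R'\<in>Pow X'. p (X, R) * K.hb (EB v) (X, R) (X', R'))"
    by (rule sum_DD)
  also have "\<dots> = (\<Sum>X\<in>Om. \<Sum>R\<in>Pow X. p (X, R) * Kmu v X X')"
  proof (intro sum.cong refl)
    fix X R assume "X \<in> Om" "R \<in> Pow X"
    then have s: "(X, R) \<in> DD" unfolding DD_def by auto
    show "(\<Sum>R'\<in>Pow X'. p (X, R) * K.hb (EB v) (X, R) (X', R')) = p (X, R) * Kmu v X X'"
      using sumR_hb_EB[OF v s X'] by (simp add: sum_distrib_left[symmetric])
  qed
  also have "\<dots> = (\<Sum>X\<in>Om. margX p X * Kmu v X X')"
    unfolding margX_def by (simp add: sum_distrib_right)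
  finally show ?thesis .
qed

lemma glauber_mu:
  assumes X: "X \<in> Om" and X': "X' \<subseteq> V"
  shows "glauber V mu X X' = (\<Sum>v\<in>V. Kmu v X X') / real (card V)"
  unfolding glauber_def
proof (intro arg_cong[where f="\<lambda>x. x / real (card V)"] sum.cong refl)
  fix v assume v: "v \<in> V"
  have sub: "X - {v} \<subseteq> V - {v}" using X Om_sub by auto
  have pm: "pin_mass V mu (V - {v}) (X - {v}) = mu (X - {v}) + mu (insert v X)"
    using pm_eq[OF v sub] by simp
  have int: "X' \<inter> (V - {v}) = X' - {v}" using X' by auto
  show "(if X' \<subseteq> V \<and> X' - {v} = X - {v} then cond V mu (V - {v}) (X - {v}) X' else 0) = Kmu v X X'"
    unfolding Kmu_def cond_def pm int using X' by simp
qed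

lemma glauber_mu_zero:
  assumes "Y \<notin> Om"
  shows "glauber V mu X Y = 0"
proof -
  have "cond V mu (V - {v}) (X - {v}) Y = 0" for v
    using assms mu_nonneg[of Y] unfolding cond_def Om_def by auto
  then have "(if Y \<subseteq> V \<and> Y - {v} = X - {v} then cond V mu (V - {v}) (X - {v}) Y else 0) = 0" for v
    by simp
  then show ?thesis unfolding glauber_def by simp
qed

lemma push_avg: "K.push (K.avgk I Ks) p t = (\<Sum>i\<in>I. K.push (Ks i) p t) / real (card I)"
  unfolding K.push_def K.avgk_def
  by (simp add: sum_distrib_left sum_divide_distrib[symmetric] sum.swap[of _ I DD])

lemma margX_P2: "margX (K.push P2 p) = step V (glauber V mu) (margX p)"
proof
  fix Y
  show "margX (K.push P2 p) Y = step V (glauber V mu) (margX p) Y"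
  proof (cases "Y \<in> Om")
    case False
    then show ?thesis unfolding step_def margX_def using glauber_mu_zero[OF False] by simp
  next
    case True
    have "margX (K.push P2 p) Y = (\<Sum>R\<in>Pow Y. (\<Sum>v\<in>V. K.push (Bk v) p (Y, R)) / real (card V))"
      unfolding margX_def P2_def push_avg using True by simp
    also have "\<dots> = (\<Sum>v\<in>V. margX (K.push (Bk v) p) Y) / real (card V)"
      unfolding margX_def using True by (simp add: sum_divide_distrib[symmetric] sum.swap[of _ "Pow Y" V])
    also have "\<dots> = (\<Sum>v\<in>V. \<Sum>X\<in>Om. margX p X * Kmu v X Y) / real (card V)"
      using margX_Bk True by simp
    also have "\<dots> = (\<Sum>X\<in>Om. margX p X * glauber V mu X Y)"
      using True Om_sub
      by (simp add: glauber_mu sum_distrib_left sum_divide_distrib sum.swap[of _ V Om])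
    also have "\<dots> = (\<Sum>X\<in>Pow V. margX p X * glauber V mu X Y)"
      by (rule sum.mono_neutral_left) (auto simp: finV Om_def margX_def)
    finally show ?thesis unfolding step_def .
  qed
qed

end

lemma glauber_supp:
  assumes nn: "\<And>Y. nu Y \<ge> 0" and ne: "glauber V nu X Y \<noteq> 0"
  shows "nu Y > 0"
proof -
  have "(\<Sum>v\<in>V. if Y \<subseteq> V \<and> Y - {v} = X - {v} then cond V nu (V - {v}) (X - {v}) Y else 0) \<noteq> 0"
    using ne unfolding glauber_def by auto
  then obtain v where "(if Y \<subseteq> V \<and> Y - {v} = X - {v} then cond V nu (V - {v}) (X - {v}) Y else 0) \<noteq> 0"
    by (rule sum.not_neutral_contains_not_neutral)
  then have "nu Y \<noteq> 0" unfolding cond_def by (auto split: if_splits)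
  then show ?thesis using nn[of Y] by simp
qed

lemma distr_at_Suc: "distr_at V P x0 (Suc t) = step V P (distr_at V P x0 t)"
  unfolding distr_at_def by simp

lemma distr_at_0: "distr_at V P x0 0 = (\<lambda>Y. if Y = x0 then 1 else 0)"
  unfolding distr_at_def by simp

lemma distr_supp:
  assumes nn: "\<And>Y. nu Y \<ge> 0" and ne: "distr_at V (glauber V nu) x0 t Y \<noteq> 0"
  shows "Y = x0 \<or> nu Y > 0"
proof (cases t)
  case 0 then show ?thesis using ne by (simp add: distr_at_0 split: if_splits)
next
  case (Suc t')
  then have "(\<Sum>X\<in>Pow V. distr_at V (glauber V nu) x0 t' X * glauber V nu X Y) \<noteq> 0"
    using ne Suc distr_at_Suc[of V "glauber V nu" x0 t'] unfolding step_def by simp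
  then obtain X where "distr_at V (glauber V nu) x0 t' X * glauber V nu X Y \<noteq> 0"
    by (rule sum.not_neutral_contains_not_neutral)
  then have "glauber V nu X Y \<noteq> 0" by auto
  then show ?thesis using glauber_supp[of nu V X Y] nn by blast
qed

context msys
begin

definition nu :: "'v set \<Rightarrow> 'v set \<Rightarrow> real" where
  "nu R = cond V (tilt V theta mu) R R"
definition Zt :: real where "Zt = (\<Sum>Y\<in>Pow V. mu Y * theta ^ card Y)"
definition PMt :: "'v set \<Rightarrow> real" where "PMt R = pin_mass V (tilt V theta mu) R R"
definition glv :: "'v \<Rightarrow> ('v set \<Rightarrow> real) \<Rightarrow> 'v set \<Rightarrow> 'v set \<Rightarrow> real" where
  "glv v f X X' = (if X' \<subseteq> V \<and> X' - {v} = X - {v} then cond V f (V - {v}) (X - {v}) X' else 0)"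

lemma Zt_pos: "Zt > 0"
  unfolding Zt_def using finV muV th0 mu_nonneg
  by (intro sum_pos2[where i=V]) auto

lemma tilt_eq: "Y \<subseteq> V \<Longrightarrow> tilt V theta mu Y = mu Y * theta ^ card Y / Zt"
  unfolding tilt_def Zt_def by simp

lemma tilt_nonneg: "tilt V theta mu Y \<ge> 0"
  unfolding tilt_def using mu_nonneg th0 Zt_pos Zt_def by auto

lemma PMt_pos:
  assumes "(X, R) \<in> DD"
  shows "PMt R > 0"
proof -
  have D: "X \<subseteq> V" "mu X > 0" "R \<subseteq> X" using DD_D[OF assms] by auto
  have "tilt V theta mu X > 0" using tilt_eq[OF D(1)] D Zt_pos th0 by simp
  then show ?thesis unfolding PMt_def pin_mass_def using D finV tilt_nonneg
    by (intro sum_pos2[where i=X]) auto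
qed

lemma PMt_nonneg: "PMt R \<ge> 0"
  unfolding PMt_def pin_mass_def using tilt_nonneg by (simp add: sum_nonneg)

lemma nu_nonneg: "nu R Y \<ge> 0"
  unfolding nu_def cond_def PMt_def[symmetric] using tilt_nonneg PMt_nonneg by simp

lemma nu_pos_D:
  assumes "nu R Y > 0"
  shows "Y \<in> Om \<and> R \<subseteq> Y"
proof -
  have c: "Y \<subseteq> V" "Y \<inter> R = R" "tilt V theta mu Y \<noteq> 0"
    using assms unfolding nu_def cond_def by (auto split: if_splits)
  then have "mu Y \<noteq> 0" using tilt_eq[OF c(1)] by auto
  then have "mu Y > 0" using mu_nonneg[of Y] by simp
  then show ?thesis using c unfolding Om_def by auto
qed

lemma nu_pi2:
  assumes R: "(X0, R) \<in> DD" and Y: "Y \<subseteq> V"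
  shows "nu R Y = pi2 (Y, R) * (theta ^ card R / ((1 - theta) ^ card R * Zt * PMt R))"
proof (cases "R \<subseteq> Y")
  case True
  have fY: "finite Y" using Y finV finite_subset by blast
  have c: "card (Y - R) + card R = card Y" using True fY
    by (metis card_Diff_subset card_mono diff_add finite_subset le_add_diff_inverse2)
  have pw: "theta ^ card (Y - R) * theta ^ card R = theta ^ card Y" using c by (metis power_add)
  have nuY: "nu R Y = mu Y * theta ^ card Y / Zt / PMt R"
    unfolding nu_def cond_def PMt_def[symmetric] using True Y tilt_eq[OF Y] by auto
  have pos: "(1 - theta) ^ card R > 0" "PMt R > 0" "Zt > 0"
    using th1 PMt_pos[OF R] Zt_pos by auto
  have piY: "pi2 (Y, R) = mu Y * ((1 - theta) ^ card R * theta ^ card (Y - R))"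
    unfolding pi2_def wt_def using True by simp
  have key: "\<And>m a b d Z P::real. a > 0 \<Longrightarrow> Z > 0 \<Longrightarrow> P > 0 \<Longrightarrow>
      m * (a * b) * (d / (a * Z * P)) = m * (b * d) / Z / P"
    by (simp add: field_simps)
  have "pi2 (Y, R) * (theta ^ card R / ((1 - theta) ^ card R * Zt * PMt R))
      = mu Y * (theta ^ card (Y - R) * theta ^ card R) / Zt / PMt R"
    unfolding piY by (rule key[OF pos(1) pos(3) pos(2)])
  also have "\<dots> = nu R Y" unfolding pw nuY ..
  finally show ?thesis by simp
next
  case False
  then show ?thesis unfolding nu_def cond_def pi2_def by auto
qed

lemma classmass_EJ:
  assumes v: "v \<in> V" and s: "(X, R) \<in> DD"
  shows "(\<Sum>u\<in>{u\<in>DD. EJ v (X, R) u}. pi2 u) = pi2 (X - {v}, R) + pi2 (insert v X, R)"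
proof -
  have D: "X \<subseteq> V" "mu X > 0" "R \<subseteq> X" using DD_D[OF s] by auto
  let ?C = "{(X - {v}, R), (insert v X, R)}"
  have ne: "(X - {v}, R) \<notin> {(insert v X, R)}" by auto
  have "(\<Sum>u\<in>{u\<in>DD. EJ v (X, R) u}. pi2 u * 1) = (\<Sum>u\<in>?C. pi2 u * 1)"
  proof (rule class_sum)
    show "finite ?C" by simp
  next
    fix u assume "u \<in> DD"
    obtain X' R' where u: "u = (X', R')" by (cases u) auto
    show "EJ v (X, R) u \<longleftrightarrow> u \<in> ?C"
    proof
      assume "EJ v (X, R) u"
      then have "R' = R" "X' - {v} = X - {v}" unfolding EJ_def u by auto
      then show "u \<in> ?C" using diff_single_cases[of X' v X] u by auto
    next
      assume "u \<in> ?C" then show "EJ v (X, R) u" unfolding EJ_def by auto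
    qed
  next
    fix u assume "u \<in> ?C" "u \<notin> DD"
    then show "pi2 u = 0" using D v by (intro pi2_zero_notDD) auto
  qed
  then show ?thesis using ne by simp
qed

lemma Jk_ident:
  assumes v: "v \<in> V" and s: "(X, R) \<in> DD" and t: "(X', R') \<in> DD"
  shows "K.hb (EJ v) (X, R) (X', R') = (if R' = R then glv v (nu R) X X' else 0)"
proof -
  have D: "X \<subseteq> V" "mu X > 0" "R \<subseteq> X" using DD_D[OF s] by auto
  have D': "X' \<subseteq> V" "mu X' > 0" "R' \<subseteq> X'" using DD_D[OF t] by auto
  show ?thesis
  proof (cases "R' = R \<and> X' - {v} = X - {v}")
    case False
    then show ?thesis unfolding K.hb_def EJ_def glv_def by auto
  next
    case True
    then have RR: "R' = R" and XX: "X' - {v} = X - {v}" by auto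
    define c where "c = theta ^ card R / ((1 - theta) ^ card R * Zt * PMt R)"
    have c: "c > 0" unfolding c_def using th0 th1 Zt_pos PMt_pos[OF s] by simp
    have sub: "X - {v} \<subseteq> V - {v}" using D by auto
    have ins: "insert v (X - {v}) = insert v X" by auto
    have n1: "nu R X' = pi2 (X', R) * c" unfolding c_def by (rule nu_pi2[OF s D'(1)])
    have n2: "nu R (X - {v}) = pi2 (X - {v}, R) * c" unfolding c_def using D by (intro nu_pi2[OF s]) auto
    have n3: "nu R (insert v X) = pi2 (insert v X, R) * c" unfolding c_def using D v by (intro nu_pi2[OF s]) auto
    have int: "X' \<inter> (V - {v}) = X' - {v}" using D' by auto
    have "glv v (nu R) X X' = nu R X' / (nu R (X - {v}) + nu R (insert v X))"
      unfolding glv_def cond_def pm_eq_gen[OF v sub] ins int using D' XX by simp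
    also have "\<dots> = pi2 (X', R) / (pi2 (X - {v}, R) + pi2 (insert v X, R))"
      unfolding n1 n2 n3 using c by (simp add: distrib_right[symmetric])
    finally have g: "glv v (nu R) X X' = pi2 (X', R) / (pi2 (X - {v}, R) + pi2 (insert v X, R))" .
    show ?thesis unfolding K.hb_def classmass_EJ[OF v s] using t RR XX g
      by (simp add: EJ_def)
  qed
qed

lemma G2_ident:
  assumes s: "(X, R) \<in> DD" and t: "(X', R') \<in> DD"
  shows "G2 (X, R) (X', R') = (if R' = R then glauber V (nu R) X X' else 0)"
proof -
  have "G2 (X, R) (X', R') = (\<Sum>v\<in>V. (if R' = R then glv v (nu R) X X' else 0)) / real (card V)"
    unfolding G2_def K.avgk_def Jk_def using Jk_ident[OF _ s t] by simp
  also have "\<dots> = (if R' = R then glauber V (nu R) X X' else 0)"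
    unfolding glauber_def glv_def by simp
  finally show ?thesis .
qed

lemma push_G2:
  assumes t: "(X', R') \<in> DD"
  shows "K.push G2 q (X', R') = (\<Sum>X\<in>Om. if R' \<subseteq> X then q (X, R') * glauber V (nu R') X X' else 0)"
proof -
  have "K.push G2 q (X', R') = (\<Sum>X\<in>Om. \<Sum>R\<in>Pow X. q (X, R) * G2 (X, R) (X', R'))"
    unfolding K.push_def by (rule sum_DD)
  also have "\<dots> = (\<Sum>X\<in>Om. \<Sum>R\<in>Pow X. if R = R' then q (X, R') * glauber V (nu R') X X' else 0)"
  proof (intro sum.cong refl)
    fix X R assume "X \<in> Om" "R \<in> Pow X"
    then have s: "(X, R) \<in> DD" unfolding DD_def by auto
    show "q (X, R) * G2 (X, R) (X', R') = (if R = R' then q (X, R') * glauber V (nu R') X X' else 0)"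
      using G2_ident[OF s t] by auto
  qed
  also have "\<dots> = (\<Sum>X\<in>Om. if R' \<subseteq> X then q (X, R') * glauber V (nu R') X X' else 0)"
  proof (intro sum.cong refl)
    fix X assume X: "X \<in> Om"
    have fin: "finite (Pow X)" using X Om_sub finV finite_subset by blast
    show "(\<Sum>R\<in>Pow X. if R = R' then q (X, R') * glauber V (nu R') X X' else 0) =
      (if R' \<subseteq> X then q (X, R') * glauber V (nu R') X X' else 0)"
      using sum.delta[OF fin, of R' "\<lambda>_. q (X, R') * glauber V (nu R') X X'"] by simp
  qed
  finally show ?thesis .
qed

end

context msys
begin

definition dd :: "'v set \<Rightarrow> 'v set \<Rightarrow> nat \<Rightarrow> 'v set \<Rightarrow> real" where
  "dd R x0 t = distr_at V (glauber V (nu R)) x0 t"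
definition Am :: "nat \<Rightarrow> 'v set \<Rightarrow> 'v set \<Rightarrow> real" where
  "Am m X Y = (\<Sum>R\<in>Pow X. wt X R * dd R X m Y)"

lemma dd_supp:
  assumes "X0 \<in> Om" "R \<subseteq> X0" "dd R X0 t X \<noteq> 0"
  shows "X \<in> Om \<and> R \<subseteq> X"
proof -
  have "X = X0 \<or> nu R X > 0"
    using distr_supp[of "nu R" V X0 t X] nu_nonneg assms(3) unfolding dd_def by blast
  then show ?thesis using assms(1,2) nu_pos_D by blast
qed

lemma sumO:
  assumes X0: "X0 \<in> Om" and R0: "R' \<subseteq> X0"
  shows "(\<Sum>X\<in>Pow V. dd R' X0 i X * h X) = (\<Sum>X\<in>Om. if R' \<subseteq> X then dd R' X0 i X * h X else 0)"
proof -
  have "(\<Sum>X\<in>Om. if R' \<subseteq> X then dd R' X0 i X * h X else 0) = (\<Sum>X\<in>{X\<in>Om. R' \<subseteq> X}. dd R' X0 i X * h X)"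
    using finOm by (simp add: sum.inter_filter)
  also have "\<dots> = (\<Sum>X\<in>Pow V. dd R' X0 i X * h X)"
  proof (rule sum.mono_neutral_left)
    show "finite (Pow V)" using finV by simp
    show "{X \<in> Om. R' \<subseteq> X} \<subseteq> Pow V" using Om_sub by auto
    show "\<forall>X\<in>Pow V - {X \<in> Om. R' \<subseteq> X}. dd R' X0 i X * h X = 0"
      using dd_supp[OF X0 R0] by auto
  qed
  finally show ?thesis by simp
qed

lemma iterC:
  assumes t: "(X', R') \<in> DD"
  shows "(K.push G2 ^^ i) (K.push Rf p) (X', R') =
    (\<Sum>X0\<in>Om. if R' \<subseteq> X0 then margX p X0 * wt X0 R' * dd R' X0 i X' else 0)"
  using t
proof (induction i arbitrary: X')
  case 0
  have D: "X' \<in> Om" "R' \<subseteq> X'" using 0 unfolding DD_def by auto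
  have "(\<Sum>X0\<in>Om. if R' \<subseteq> X0 then margX p X0 * wt X0 R' * dd R' X0 0 X' else 0)
      = (\<Sum>X0\<in>Om. if X0 = X' then margX p X' * wt X' R' else 0)"
    by (intro sum.cong refl) (auto simp: dd_def distr_at_0 D)
  also have "\<dots> = margX p X' * wt X' R'" using D finOm by simp
  also have "\<dots> = K.push Rf p (X', R')" using push_Rf[OF 0] D unfolding margX_def by simp
  finally show ?case by simp
next
  case (Suc i)
  define c where "c X0 = margX p X0 * wt X0 R'" for X0
  define gl where "gl X = glauber V (nu R') X X'" for X
  have IH: "(K.push G2 ^^ i) (K.push Rf p) (X, R') =
      (\<Sum>X0\<in>Om. if R' \<subseteq> X0 then c X0 * dd R' X0 i X else 0)" if "X \<in> Om" "R' \<subseteq> X" for X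
    using Suc.IH[of X] that unfolding c_def DD_def by auto
  have "(K.push G2 ^^ Suc i) (K.push Rf p) (X', R')
      = (\<Sum>X\<in>Om. if R' \<subseteq> X then (K.push G2 ^^ i) (K.push Rf p) (X, R') * gl X else 0)"
    using push_G2[OF Suc.prems] unfolding gl_def by simp
  also have "\<dots> = (\<Sum>X\<in>Om. \<Sum>X0\<in>Om. if R' \<subseteq> X \<and> R' \<subseteq> X0 then c X0 * dd R' X0 i X * gl X else 0)"
  proof (intro sum.cong refl)
    fix X assume X: "X \<in> Om"
    show "(if R' \<subseteq> X then (K.push G2 ^^ i) (K.push Rf p) (X, R') * gl X else 0) =
      (\<Sum>X0\<in>Om. if R' \<subseteq> X \<and> R' \<subseteq> X0 then c X0 * dd R' X0 i X * gl X else 0)"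
    proof (cases "R' \<subseteq> X")
      case True
      then show ?thesis using IH[OF X True] by (auto simp: sum_distrib_right intro!: sum.cong)
    qed simp
  qed
  also have "\<dots> = (\<Sum>X0\<in>Om. \<Sum>X\<in>Om. if R' \<subseteq> X \<and> R' \<subseteq> X0 then c X0 * dd R' X0 i X * gl X else 0)"
    by (rule sum.swap)
  also have "\<dots> = (\<Sum>X0\<in>Om. if R' \<subseteq> X0 then c X0 * dd R' X0 (Suc i) X' else 0)"
  proof (intro sum.cong refl)
    fix X0 assume X0: "X0 \<in> Om"
    show "(\<Sum>X\<in>Om. if R' \<subseteq> X \<and> R' \<subseteq> X0 then c X0 * dd R' X0 i X * gl X else 0) =
      (if R' \<subseteq> X0 then c X0 * dd R' X0 (Suc i) X' else 0)"
    proof (cases "R' \<subseteq> X0")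
      case True
      have "dd R' X0 (Suc i) X' = (\<Sum>X\<in>Pow V. dd R' X0 i X * gl X)"
        unfolding dd_def distr_at_Suc step_def gl_def ..
      also have "\<dots> = (\<Sum>X\<in>Om. if R' \<subseteq> X then dd R' X0 i X * gl X else 0)"
        by (rule sumO[OF X0 True])
      finally show ?thesis using True
        by (auto simp: sum_distrib_left mult.assoc intro!: sum.cong)
    qed simp
  qed
  finally show ?case unfolding c_def by simp
qed

lemma margX_roundC: "margX (roundC m p) = step V (Am m) (margX p)"
proof
  fix X'
  have stepO: "step V (Am m) (margX p) X' = (\<Sum>X0\<in>Om. margX p X0 * Am m X0 X')"
    unfolding step_def by (rule sum.mono_neutral_right) (auto simp: finV Om_def margX_def)
  show "margX (roundC m p) X' = step V (Am m) (margX p) X'"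
  proof (cases "X' \<in> Om")
    case False
    have "Am m X0 X' = 0" if "X0 \<in> Om" for X0
      unfolding Am_def using dd_supp[OF that] False by (auto intro!: sum.neutral)
    then show ?thesis unfolding stepO using False by (simp add: margX_def)
  next
    case True
    have fX': "finite (Pow X')" using True Om_sub finV finite_subset by blast
    have "margX (roundC m p) X' = (\<Sum>R'\<in>Pow X'. roundC m p (X', R'))"
      using True by (simp add: margX_def)
    also have "\<dots> = (\<Sum>R'\<in>Pow X'.
        \<Sum>X0\<in>Om. if R' \<subseteq> X0 then margX p X0 * wt X0 R' * dd R' X0 m X' else 0)"
    proof (intro sum.cong refl)
      fix R' assume "R' \<in> Pow X'"
      then have "(X', R') \<in> DD" using True unfolding DD_def by auto
      then show "roundC m p (X', R') =
        (\<Sum>X0\<in>Om. if R' \<subseteq> X0 then margX p X0 * wt X0 R' * dd R' X0 m X' else 0)"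
        unfolding roundC_def by (rule iterC)
    qed
    also have "\<dots> = (\<Sum>X0\<in>Om. \<Sum>R'\<in>Pow X'.
        if R' \<subseteq> X0 then margX p X0 * wt X0 R' * dd R' X0 m X' else 0)"
      by (rule sum.swap)
    also have "\<dots> = (\<Sum>X0\<in>Om. margX p X0 * Am m X0 X')"
    proof (intro sum.cong refl)
      fix X0 assume X0: "X0 \<in> Om"
      have fX0: "finite (Pow X0)" using X0 Om_sub finV finite_subset by blast
      let ?a = "\<lambda>R'. margX p X0 * wt X0 R' * dd R' X0 m X'"
      have "(\<Sum>R'\<in>Pow X'. if R' \<subseteq> X0 then ?a R' else 0) = (\<Sum>R'\<in>{R'\<in>Pow X'. R' \<subseteq> X0}. ?a R')"
        by (simp only: sum.inter_filter[OF fX'])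
      also have "\<dots> = (\<Sum>R'\<in>Pow X0. ?a R')"
      proof (rule sum.mono_neutral_left)
        show "finite (Pow X0)" by (rule fX0)
        show "{R' \<in> Pow X'. R' \<subseteq> X0} \<subseteq> Pow X0" by auto
        show "\<forall>R'\<in>Pow X0 - {R' \<in> Pow X'. R' \<subseteq> X0}. ?a R' = 0"
          using dd_supp[OF X0] by auto
      qed
      also have "\<dots> = margX p X0 * Am m X0 X'" unfolding Am_def
        by (simp add: sum_distrib_left mult.assoc)
      finally show "(\<Sum>R'\<in>Pow X'. if R' \<subseteq> X0 then ?a R' else 0) = margX p X0 * Am m X0 X'" .
    qed
    finally show ?thesis unfolding stepO .
  qed
qed

lemma margX_Rf_fun: "margX (K.push Rf p) = margX p"
  using margX_Rf by auto

lemma margX_P2_iter: "margX ((K.push P2 ^^ i) q) = (step V (glauber V mu) ^^ i) (margX q)"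
  by (induction i) (simp_all add: margX_P2)

lemma margX_roundF: "margX (roundF m p) = (step V (glauber V mu) ^^ m) (margX p)"
  unfolding roundF_def margX_P2_iter margX_Rf_fun ..

lemma margX_delta2: "margX delta2 = (\<lambda>Y. if Y = V then 1 else 0)"
proof
  fix Y
  show "margX delta2 Y = (if Y = V then 1 else 0)"
  proof (cases "Y = V")
    case True
    have VO: "V \<in> Om" using muV unfolding Om_def by auto
    have "(\<Sum>R\<in>Pow V. delta2 (V, R)) = 1"
      unfolding delta2_def using finV by (simp add: sum.delta)
    then show ?thesis using True VO unfolding margX_def by simp
  next
    case False
    then show ?thesis unfolding margX_def delta2_def by simp
  qed
qed

lemma rounds_F: "margX ((roundF m ^^ j) delta2) = distr_at V (glauber V mu) V (j * m)"
proof (induction j)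
  case 0 then show ?case by (simp add: margX_delta2 distr_at_0)
next
  case (Suc j)
  have "margX ((roundF m ^^ Suc j) delta2) = (step V (glauber V mu) ^^ m) (distr_at V (glauber V mu) V (j * m))"
    using Suc by (simp add: margX_roundF)
  also have "\<dots> = distr_at V (glauber V mu) V (Suc j * m)"
    unfolding distr_at_def by (simp add: funpow_add)
  finally show ?case .
qed

lemma rounds_C: "margX ((roundC m ^^ j) delta2) = distr_at V (Am m) V j"
proof (induction j)
  case 0 then show ?case by (simp add: margX_delta2 distr_at_0)
next
  case (Suc j) then show ?case by (simp add: margX_roundC distr_at_Suc)
qed

lemma tv_joint_X:
  "(\<Sum>s\<in>DD. \<bar>K.push Rf F s - pi2 s\<bar>) = (\<Sum>X\<in>Pow V. \<bar>margX F X - mu X\<bar>)"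
proof -
  have "(\<Sum>s\<in>DD. \<bar>K.push Rf F s - pi2 s\<bar>) = (\<Sum>X\<in>Om. \<Sum>R\<in>Pow X. \<bar>K.push Rf F (X, R) - pi2 (X, R)\<bar>)"
    by (rule sum_DD)
  also have "\<dots> = (\<Sum>X\<in>Om. \<Sum>R\<in>Pow X. \<bar>margX F X - mu X\<bar> * wt X R)"
  proof (intro sum.cong refl)
    fix X R assume X: "X \<in> Om" and R: "R \<in> Pow X"
    then have s: "(X, R) \<in> DD" unfolding DD_def by auto
    have "K.push Rf F (X, R) - pi2 (X, R) = (margX F X - mu X) * wt X R"
      using push_Rf[OF s] X R unfolding margX_def pi2_def by (simp add: algebra_simps)
    then show "\<bar>K.push Rf F (X, R) - pi2 (X, R)\<bar> = \<bar>margX F X - mu X\<bar> * wt X R"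
      using wt_pos[of X R] by (simp add: abs_mult)
  qed
  also have "\<dots> = (\<Sum>X\<in>Om. \<bar>margX F X - mu X\<bar>)"
  proof (intro sum.cong refl)
    fix X assume "X \<in> Om"
    then have "finite X" using Om_sub finV finite_subset by blast
    then show "(\<Sum>R\<in>Pow X. \<bar>margX F X - mu X\<bar> * wt X R) = \<bar>margX F X - mu X\<bar>"
      by (simp add: sum_distrib_left[symmetric] wt_sum)
  qed
  also have "\<dots> = (\<Sum>X\<in>Pow V. \<bar>margX F X - mu X\<bar>)"
  proof (rule sum.mono_neutral_left)
    show "finite (Pow V)" using finV by simp
    show "Om \<subseteq> Pow V" using Om_sub by auto
    show "\<forall>X\<in>Pow V - Om. \<bar>margX F X - mu X\<bar> = 0"
      using mu_nonneg unfolding margX_def Om_def by (auto simp: order.not_eq_order_implies_strict)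
  qed
  finally show ?thesis .
qed

lemma key_compare:
  "dTV V (distr_at V (glauber V mu) V (k * m)) mu \<le> dTV V (distr_at V (Am m) V k) mu"
  using joint_tv[where m=m and k=k] unfolding tv_joint_X rounds_F rounds_C dTV_def by (simp add: divide_right_mono)

end

lemma sum_abs_kernel:
  fixes a :: "'a \<Rightarrow> real" and K :: "'a \<Rightarrow> 'b \<Rightarrow> real"
  assumes "finite A" "finite B"
  shows "(\<Sum>y\<in>B. \<bar>\<Sum>x\<in>A. a x * K x y\<bar>) \<le> (\<Sum>x\<in>A. \<bar>a x\<bar> * (\<Sum>y\<in>B. \<bar>K x y\<bar>))"
proof -
  have "(\<Sum>y\<in>B. \<bar>\<Sum>x\<in>A. a x * K x y\<bar>) \<le> (\<Sum>y\<in>B. \<Sum>x\<in>A. \<bar>a x\<bar> * \<bar>K x y\<bar>)"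
    by (intro sum_mono order.trans[OF sum_abs]) (simp add: abs_mult)
  also have "\<dots> = (\<Sum>x\<in>A. \<bar>a x\<bar> * (\<Sum>y\<in>B. \<bar>K x y\<bar>))"
    by (subst sum.swap) (simp add: sum_distrib_left)
  finally show ?thesis .
qed

lemma dTV_step_mono:
  assumes finV: "finite V" and nn: "\<And>X Y. P X Y \<ge> 0" and rows: "\<And>X. X \<in> Pow V \<Longrightarrow> (\<Sum>Y\<in>Pow V. P X Y) \<le> 1"
    and stat: "\<And>Y. Y \<in> Pow V \<Longrightarrow> step V P q Y = q Y"
  shows "dTV V (step V P p) q \<le> dTV V p q"
proof -
  have "(\<Sum>Y\<in>Pow V. \<bar>step V P p Y - q Y\<bar>) = (\<Sum>Y\<in>Pow V. \<bar>\<Sum>X\<in>Pow V. (p X - q X) * P X Y\<bar>)"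
    using stat unfolding step_def by (intro sum.cong refl) (simp add: left_diff_distrib sum_subtractf)
  also have "\<dots> \<le> (\<Sum>X\<in>Pow V. \<bar>p X - q X\<bar> * (\<Sum>Y\<in>Pow V. \<bar>P X Y\<bar>))"
    using finV by (intro sum_abs_kernel) auto
  also have "\<dots> \<le> (\<Sum>X\<in>Pow V. \<bar>p X - q X\<bar> * 1)"
    using rows nn by (intro sum_mono mult_left_mono) auto
  finally show ?thesis unfolding dTV_def by (simp add: divide_right_mono)
qed

lemma dTV_distr_mono:
  assumes finV: "finite V" and nn: "\<And>X Y. P X Y \<ge> 0" and rows: "\<And>X. X \<in> Pow V \<Longrightarrow> (\<Sum>Y\<in>Pow V. P X Y) \<le> 1"
    and stat: "\<And>Y. Y \<in> Pow V \<Longrightarrow> step V P q Y = q Y" and tt: "t \<le> t'"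
  shows "dTV V (distr_at V P x0 t') q \<le> dTV V (distr_at V P x0 t) q"
  using tt
proof (induction t' rule: dec_induct)
  case base then show ?case by simp
next
  case (step n)
  then show ?case using dTV_step_mono[OF finV nn rows stat, of "distr_at V P x0 n"]
    unfolding distr_at_Suc by simp
qed

lemma mix_from_le:
  assumes finV: "finite V" and nn: "\<And>X Y. P X Y \<ge> 0" and rows: "\<And>X. X \<in> Pow V \<Longrightarrow> (\<Sum>Y\<in>Pow V. P X Y) \<le> 1"
    and stat: "\<And>Y. Y \<in> Pow V \<Longrightarrow> step V P q Y = q Y" and le: "mix_from V P q x0 eps \<le> enat m"
  shows "dTV V (distr_at V P x0 m) q \<le> eps"
proof -
  have ex: "\<exists>t. dTV V (distr_at V P x0 t) q \<le> eps"
    using le unfolding mix_from_def by (auto split: if_splits)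
  define t where "t = (LEAST t. dTV V (distr_at V P x0 t) q \<le> eps)"
  have t1: "dTV V (distr_at V P x0 t) q \<le> eps" unfolding t_def using ex by (rule LeastI_ex)
  have "enat t \<le> enat m" using le ex unfolding mix_from_def t_def by simp
  then have "t \<le> m" by simp
  then show ?thesis using dTV_distr_mono[OF finV nn rows stat, of t m x0] t1 by simp
qed

lemma cond_nonneg: "(\<And>Y. f Y \<ge> 0) \<Longrightarrow> cond V f S sg Y \<ge> 0"
  unfolding cond_def pin_mass_def by (auto intro!: divide_nonneg_nonneg sum_nonneg)

lemma glauber_nonneg:
  assumes nn: "\<And>Y. f Y \<ge> 0"
  shows "glauber V f X Y \<ge> 0"
  unfolding glauber_def using cond_nonneg[of f, OF nn] by (auto intro!: divide_nonneg_nonneg sum_nonneg)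

lemma diff_single_cases2: "A - {v} = B - {v} \<Longrightarrow> A = B - {v} \<or> A = insert v B"
  by blast

lemma cls2:
  assumes finV: "finite V" and v: "v \<in> V" and X: "X \<subseteq> V"
  shows "(\<Sum>Y\<in>Pow V. (if Y \<subseteq> V \<and> Y - {v} = X - {v} then g Y else 0)) = g (X - {v}) + g (insert v X)"
proof -
  have "(\<Sum>Y\<in>Pow V. (if Y \<subseteq> V \<and> Y - {v} = X - {v} then g Y else 0)) = (\<Sum>Y\<in>{X - {v}, insert v X}. g Y)"
  proof (rule sum.mono_neutral_cong_right)
    show "finite (Pow V)" using finV by simp
    show "{X - {v}, insert v X} \<subseteq> Pow V" using v X by auto
    show "\<forall>Y\<in>Pow V - {X - {v}, insert v X}. (if Y \<subseteq> V \<and> Y - {v} = X - {v} then g Y else 0) = 0"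
    proof
      fix Y assume Y: "Y \<in> Pow V - {X - {v}, insert v X}"
      have "Y - {v} \<noteq> X - {v}"
      proof
        assume "Y - {v} = X - {v}"
        then have "Y = X - {v} \<or> Y = insert v X" by (rule diff_single_cases2)
        then show False using Y by blast
      qed
      then show "(if Y \<subseteq> V \<and> Y - {v} = X - {v} then g Y else 0) = 0" by simp
    qed
    fix Y assume "Y \<in> {X - {v}, insert v X}"
    then show "(if Y \<subseteq> V \<and> Y - {v} = X - {v} then g Y else 0) = g Y" using v X by auto
  qed
  moreover have "X - {v} \<noteq> insert v X" by auto
  ultimately show ?thesis by simp
qed

lemma cond_v:
  assumes v: "v \<in> V" and X: "X \<subseteq> V" and Y: "Y \<subseteq> V" and e: "Y - {v} = X - {v}"
  shows "cond V f (V - {v}) (X - {v}) Y = f Y / (f (X - {v}) + f (insert v X))"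
proof -
  have sub: "X - {v} \<subseteq> V - {v}" using X by auto
  have "Y \<inter> (V - {v}) = X - {v}" using Y e by auto
  moreover have "insert v (X - {v}) = insert v X" by auto
  ultimately show ?thesis unfolding cond_def pm_eq_gen[OF v sub] using Y by simp
qed

lemma glauber_rows:
  assumes finV: "finite V" and nn: "\<And>Y. f Y \<ge> 0" and X: "X \<subseteq> V"
  shows "(\<Sum>Y\<in>Pow V. glauber V f X Y) \<le> 1"
proof -
  have each: "(\<Sum>Y\<in>Pow V. (if Y \<subseteq> V \<and> Y - {v} = X - {v} then cond V f (V - {v}) (X - {v}) Y else 0)) \<le> 1"
    if v: "v \<in> V" for v
  proof -
    have "(\<Sum>Y\<in>Pow V. (if Y \<subseteq> V \<and> Y - {v} = X - {v} then cond V f (V - {v}) (X - {v}) Y else 0))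
        = cond V f (V - {v}) (X - {v}) (X - {v}) + cond V f (V - {v}) (X - {v}) (insert v X)"
      by (rule cls2[OF finV v X])
    also have "\<dots> = (f (X - {v}) + f (insert v X)) / (f (X - {v}) + f (insert v X))"
    proof -
      have c1: "cond V f (V - {v}) (X - {v}) (X - {v}) = f (X - {v}) / (f (X - {v}) + f (insert v X))"
        using cond_v[OF v X, of "X - {v}" f] X by auto
      have c2: "cond V f (V - {v}) (X - {v}) (insert v X) = f (insert v X) / (f (X - {v}) + f (insert v X))"
        using cond_v[OF v X, of "insert v X" f] X v by auto
      show ?thesis unfolding c1 c2 by (rule add_divide_distrib[symmetric])
    qed
    also have "\<dots> \<le> 1" by (cases "f (X - {v}) + f (insert v X) = 0") auto
    finally show ?thesis .
  qed
  have "(\<Sum>Y\<in>Pow V. glauber V f X Y) =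
      (\<Sum>v\<in>V. \<Sum>Y\<in>Pow V. (if Y \<subseteq> V \<and> Y - {v} = X - {v} then cond V f (V - {v}) (X - {v}) Y else 0)) / real (card V)"
    unfolding glauber_def by (simp add: sum_divide_distrib[symmetric]) (rule disjI2, rule sum.swap)
  also have "\<dots> \<le> (\<Sum>v\<in>V. 1) / real (card V)"
    using each by (intro divide_right_mono sum_mono) auto
  also have "\<dots> \<le> 1" by simp
  finally show ?thesis .
qed

lemma glauber_stat:
  assumes finV: "finite V" and Vne: "V \<noteq> {}" and nn: "\<And>Y. f Y \<ge> 0" and Y: "Y \<subseteq> V"
  shows "step V (glauber V f) f Y = f Y"
proof -
  have each: "(\<Sum>X\<in>Pow V. f X * (if Y \<subseteq> V \<and> Y - {v} = X - {v} then cond V f (V - {v}) (X - {v}) Y else 0)) = f Y"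
    if v: "v \<in> V" for v
  proof -
    define M where "M = f (Y - {v}) + f (insert v Y)"
    have "(\<Sum>X\<in>Pow V. f X * (if Y \<subseteq> V \<and> Y - {v} = X - {v} then cond V f (V - {v}) (X - {v}) Y else 0))
        = (\<Sum>X\<in>Pow V. (if X \<subseteq> V \<and> X - {v} = Y - {v} then f X * (f Y / M) else 0))"
    proof (intro sum.cong refl)
      fix X assume X: "X \<in> Pow V"
      show "f X * (if Y \<subseteq> V \<and> Y - {v} = X - {v} then cond V f (V - {v}) (X - {v}) Y else 0) =
        (if X \<subseteq> V \<and> X - {v} = Y - {v} then f X * (f Y / M) else 0)"
      proof (cases "X - {v} = Y - {v}")
        case True
        have "cond V f (V - {v}) (X - {v}) Y = cond V f (V - {v}) (Y - {v}) Y" using True by simp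
        also have "\<dots> = f Y / M" unfolding M_def by (rule cond_v[OF v Y Y refl])
        finally show ?thesis using True X Y by simp
      qed (auto)
    qed
    also have "\<dots> = f (Y - {v}) * (f Y / M) + f (insert v Y) * (f Y / M)"
      by (rule cls2[OF finV v Y])
    also have "\<dots> = f Y"
    proof (cases "M = 0")
      case True
      have "f Y \<le> M" unfolding M_def using nn[of "Y - {v}"] nn[of "insert v Y"]
        by (cases "v \<in> Y") (auto simp: insert_absorb)
      then have "f Y = 0" using True nn[of Y] by simp
      then show ?thesis by simp
    next
      case False
      have "f (Y - {v}) * (f Y / M) + f (insert v Y) * (f Y / M) = M * (f Y / M)"
        unfolding M_def by (simp only: distrib_right)
      also have "\<dots> = f Y" using False by simp
      finally show ?thesis .
    qed
    finally show ?thesis .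
  qed
  have cV: "real (card V) > 0" using finV Vne by (simp add: card_gt_0_iff)
  have "step V (glauber V f) f Y =
      (\<Sum>v\<in>V. \<Sum>X\<in>Pow V. f X * (if Y \<subseteq> V \<and> Y - {v} = X - {v} then cond V f (V - {v}) (X - {v}) Y else 0)) / real (card V)"
    unfolding step_def glauber_def
    by (simp add: sum_distrib_left sum_divide_distrib[symmetric]) (rule disjI2, rule sum.swap)
  also have "\<dots> = (\<Sum>v\<in>V. f Y) / real (card V)" using each by simp
  also have "\<dots> = f Y" using cV by simp
  finally show ?thesis .
qed

lemma distr_mass:
  assumes finV: "finite V" and nn: "\<And>X Y. P X Y \<ge> 0" and rows: "\<And>X. X \<in> Pow V \<Longrightarrow> (\<Sum>Y\<in>Pow V. P X Y) \<le> 1"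
  shows "(\<forall>Y. distr_at V P x0 t Y \<ge> 0) \<and> (x0 \<in> Pow V \<longrightarrow> (\<Sum>Y\<in>Pow V. distr_at V P x0 t Y) \<le> 1)"
proof (induction t)
  case 0 then show ?case using finV by (simp add: distr_at_0 sum.delta)
next
  case (Suc t)
  let ?d = "distr_at V P x0 t"
  have nn': "\<forall>Y. distr_at V P x0 (Suc t) Y \<ge> 0"
    using Suc nn unfolding distr_at_Suc step_def by (auto intro!: sum_nonneg)
  have "(\<Sum>Y\<in>Pow V. distr_at V P x0 (Suc t) Y) = (\<Sum>X\<in>Pow V. ?d X * (\<Sum>Y\<in>Pow V. P X Y))"
    unfolding distr_at_Suc step_def by (subst sum.swap) (simp add: sum_distrib_left)
  also have "\<dots> \<le> (\<Sum>X\<in>Pow V. ?d X * 1)"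
    using Suc rows by (intro sum_mono mult_left_mono) auto
  finally show ?case using nn' Suc by auto
qed


lemma cond_sum_le1:
  assumes finV: "finite V" and nn: "\<And>Y. f Y \<ge> 0"
  shows "(\<Sum>Y\<in>Pow V. cond V f S sg Y) \<le> 1"
proof -
  have "(\<Sum>Y\<in>Pow V. cond V f S sg Y) = (\<Sum>Y\<in>Pow V. if Y \<inter> S = sg then f Y / pin_mass V f S sg else 0)"
    unfolding cond_def by (intro sum.cong refl) auto
  also have "\<dots> = (\<Sum>Y\<in>{Y\<in>Pow V. Y \<inter> S = sg}. f Y / pin_mass V f S sg)"
    using finV by (simp only: sum.inter_filter[OF finite_Pow_iff[THEN iffD2, OF finV]])
  also have "\<dots> = pin_mass V f S sg / pin_mass V f S sg"
    unfolding pin_mass_def by (rule sum_divide_distrib[symmetric])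
  also have "\<dots> \<le> 1" by (cases "pin_mass V f S sg = 0") auto
  finally show ?thesis .
qed

context msys
begin

abbreviation FD where "FD \<equiv> field_dyn V mu theta"

lemma FD_form:
  assumes X: "X \<subseteq> V"
  shows "FD X Y = (\<Sum>R\<in>Pow X. wt X R * nu R Y)"
  unfolding field_dyn_def
proof (rule sum.reindex_bij_witness[where i="\<lambda>R. V - R" and j="\<lambda>S. V - S"])
  fix S assume S: "S \<in> {S \<in> Pow V. V - X \<subseteq> S}"
  show "V - (V - S) = S" using S by auto
  show "V - S \<in> Pow X" using S by auto
  have e1: "V - S = X - S" using S X by auto
  have e2: "X - (V - S) = S \<inter> X" using X by auto
  show "wt X (V - S) * nu (V - S) Y =
    theta ^ card (S \<inter> X) * (1 - theta) ^ card (X - S) * cond V (tilt V theta mu) (V - S) (V - S) Y"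
    unfolding wt_def nu_def e2 by (simp add: e1)
next
  fix R assume R: "R \<in> Pow X"
  show "V - (V - R) = R" using R X by auto
  show "V - R \<in> {S \<in> Pow V. V - X \<subseteq> S}" using R by auto
qed

lemma FD_nonneg: "FD X Y \<ge> 0"
  unfolding field_dyn_def using th0 th1 tilt_nonneg
  by (auto intro!: sum_nonneg mult_nonneg_nonneg cond_nonneg)

lemma nu_rows: "(\<Sum>Y\<in>Pow V. nu R Y) \<le> 1"
  unfolding nu_def by (rule cond_sum_le1[OF finV tilt_nonneg])

lemma FD_rows:
  assumes X: "X \<in> Pow V"
  shows "(\<Sum>Y\<in>Pow V. FD X Y) \<le> 1"
proof -
  have fX: "finite X" using X finV finite_subset by blast
  have "(\<Sum>Y\<in>Pow V. FD X Y) = (\<Sum>R\<in>Pow X. wt X R * (\<Sum>Y\<in>Pow V. nu R Y))"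
    using X by (simp add: FD_form sum_distrib_left) (rule sum.swap)
  also have "\<dots> \<le> (\<Sum>R\<in>Pow X. wt X R * 1)"
    using nu_rows wt_pos by (intro sum_mono mult_left_mono) (auto simp: less_imp_le)
  also have "\<dots> = 1" using wt_sum[OF fX] by simp
  finally show ?thesis .
qed

lemma nuSR:
  assumes Y: "Y \<subseteq> V" and R: "R \<subseteq> V"
  shows "nu R Y * (\<Sum>X\<in>Pow V. if R \<subseteq> X then pi2 (X, R) else 0) = pi2 (Y, R)"
proof (cases "\<exists>X0. (X0, R) \<in> DD")
  case True
  then obtain X0 where X0: "(X0, R) \<in> DD" by blast
  define c where "c = theta ^ card R / ((1 - theta) ^ card R * Zt * PMt R)"
  have nuY: "nu R Y = pi2 (Y, R) * c" unfolding c_def by (rule nu_pi2[OF X0 Y])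
  have pos: "(1 - theta) ^ card R > 0" "PMt R > 0" "Zt > 0" "theta ^ card R > 0"
    using th0 th1 PMt_pos[OF X0] Zt_pos by auto
  have PM: "PMt R = (\<Sum>X\<in>Pow V. if R \<subseteq> X then mu X * theta ^ card X / Zt else 0)"
  proof -
    have "PMt R = (\<Sum>X\<in>{X\<in>Pow V. X \<inter> R = R}. tilt V theta mu X)" unfolding PMt_def pin_mass_def ..
    also have "\<dots> = (\<Sum>X\<in>Pow V. if X \<inter> R = R then tilt V theta mu X else 0)"
      using finV by (simp only: sum.inter_filter[OF finite_Pow_iff[THEN iffD2, OF finV]])
    also have "\<dots> = (\<Sum>X\<in>Pow V. if R \<subseteq> X then mu X * theta ^ card X / Zt else 0)"
      by (intro sum.cong refl) (auto simp: tilt_eq)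
    finally show ?thesis .
  qed
  have SR: "(\<Sum>X\<in>Pow V. if R \<subseteq> X then pi2 (X, R) else 0)
      = ((1 - theta) ^ card R / theta ^ card R) * Zt * PMt R"
  proof -
    have "(\<Sum>X\<in>Pow V. if R \<subseteq> X then pi2 (X, R) else 0)
        = (\<Sum>X\<in>Pow V. ((1 - theta) ^ card R / theta ^ card R) * Zt * (if R \<subseteq> X then mu X * theta ^ card X / Zt else 0))"
    proof (intro sum.cong refl)
      fix X assume X: "X \<in> Pow V"
      show "(if R \<subseteq> X then pi2 (X, R) else 0) =
        ((1 - theta) ^ card R / theta ^ card R) * Zt * (if R \<subseteq> X then mu X * theta ^ card X / Zt else 0)"
      proof (cases "R \<subseteq> X")
        case True
        have fX: "finite X" using X finV finite_subset by blast
        have c: "card (X - R) + card R = card X" using True fX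
          by (metis card_Diff_subset card_mono diff_add finite_subset le_add_diff_inverse2)
        have pw: "theta ^ card X = theta ^ card (X - R) * theta ^ card R"
          using c by (metis power_add)
        have key: "\<And>a b d Z m::real. d > 0 \<Longrightarrow> Z > 0 \<Longrightarrow> (a / d) * Z * (m * (b * d) / Z) = m * (a * b)"
          by (simp add: field_simps)
        have "((1 - theta) ^ card R / theta ^ card R) * Zt * (mu X * (theta ^ card (X - R) * theta ^ card R) / Zt)
            = mu X * ((1 - theta) ^ card R * theta ^ card (X - R))"
          by (rule key[OF pos(4) pos(3)])
        then show ?thesis using True unfolding pi2_def wt_def pw by simp
      qed simp
    qed
    also have "\<dots> = ((1 - theta) ^ card R / theta ^ card R) * Zt * PMt R"
      unfolding PM by (simp add: sum_distrib_left)
    finally show ?thesis .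
  qed
  have ck: "c * (((1 - theta) ^ card R / theta ^ card R) * Zt * PMt R) = 1"
  proof -
    have key: "\<And>a d Z P::real. a > 0 \<Longrightarrow> d > 0 \<Longrightarrow> Z > 0 \<Longrightarrow> P > 0 \<Longrightarrow> d / (a * Z * P) * (a / d * Z * P) = 1"
      by (simp add: field_simps)
    show ?thesis unfolding c_def by (rule key[OF pos(1) pos(4) pos(3) pos(2)])
  qed
  have "pi2 (Y, R) * c * (((1 - theta) ^ card R / theta ^ card R) * Zt * PMt R)
      = pi2 (Y, R) * (c * (((1 - theta) ^ card R / theta ^ card R) * Zt * PMt R))"
    by (simp only: mult.assoc)
  then show ?thesis unfolding nuY SR ck by simp
next
  case False
  have "pi2 (X, R) = 0" if "X \<in> Pow V" for X
  proof (rule ccontr)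
    assume "pi2 (X, R) \<noteq> 0"
    then have "(X, R) \<in> DD" using pi2_DD[of "(X, R)"] that by auto
    then show False using False by blast
  qed
  then have "(\<Sum>X\<in>Pow V. if R \<subseteq> X then pi2 (X, R) else 0) = 0" "pi2 (Y, R) = 0"
    using Y by (auto intro!: sum.neutral)
  then show ?thesis by simp
qed

lemma FD_stat:
  assumes Y: "Y \<in> Pow V"
  shows "step V FD mu Y = mu Y"
proof -
  have fY: "finite Y" using Y finV finite_subset by blast
  have "step V FD mu Y = (\<Sum>X\<in>Pow V. \<Sum>R\<in>Pow V. if R \<subseteq> X then pi2 (X, R) * nu R Y else 0)"
    unfolding step_def
  proof (intro sum.cong refl)
    fix X assume X: "X \<in> Pow V"
    have fX: "finite (Pow X)" using X finV finite_subset by blast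
    have "mu X * FD X Y = (\<Sum>R\<in>Pow X. pi2 (X, R) * nu R Y)"
      using X by (simp add: FD_form sum_distrib_left pi2_def mult.assoc)
    also have "\<dots> = (\<Sum>R\<in>Pow V. if R \<subseteq> X then pi2 (X, R) * nu R Y else 0)"
    proof -
      have "(\<Sum>R\<in>Pow V. if R \<subseteq> X then pi2 (X, R) * nu R Y else 0) = (\<Sum>R\<in>{R\<in>Pow V. R \<subseteq> X}. pi2 (X, R) * nu R Y)"
        using finV by (simp only: sum.inter_filter[OF finite_Pow_iff[THEN iffD2, OF finV]])
      also have "{R\<in>Pow V. R \<subseteq> X} = Pow X" using X by auto
      finally show ?thesis by simp
    qed
    finally show "mu X * FD X Y = (\<Sum>R\<in>Pow V. if R \<subseteq> X then pi2 (X, R) * nu R Y else 0)" .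
  qed
  also have "\<dots> = (\<Sum>R\<in>Pow V. \<Sum>X\<in>Pow V. if R \<subseteq> X then pi2 (X, R) * nu R Y else 0)"
    by (rule sum.swap)
  also have "\<dots> = (\<Sum>R\<in>Pow V. pi2 (Y, R))"
  proof (intro sum.cong refl)
    fix R assume R: "R \<in> Pow V"
    have "(\<Sum>X\<in>Pow V. if R \<subseteq> X then pi2 (X, R) * nu R Y else 0)
        = nu R Y * (\<Sum>X\<in>Pow V. if R \<subseteq> X then pi2 (X, R) else 0)"
      by (simp add: sum_distrib_left if_distrib mult.commute cong: if_cong)
    also have "\<dots> = pi2 (Y, R)" using nuSR Y R by auto
    finally show "(\<Sum>X\<in>Pow V. if R \<subseteq> X then pi2 (X, R) * nu R Y else 0) = pi2 (Y, R)" .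
  qed
  also have "\<dots> = (\<Sum>R\<in>Pow Y. pi2 (Y, R))"
    by (rule sum.mono_neutral_right) (use Y finV in \<open>auto simp: pi2_def\<close>)
  also have "\<dots> = mu Y * (\<Sum>R\<in>Pow Y. wt Y R)"
    by (simp add: pi2_def sum_distrib_left)
  also have "\<dots> = mu Y" using wt_sum[OF fY] by simp
  finally show ?thesis .
qed

end

context msys
begin

lemma gl_nu_nn: "glauber V (nu R) X Y \<ge> 0"
  by (rule glauber_nonneg[OF nu_nonneg])

lemma gl_nu_rows: "X \<in> Pow V \<Longrightarrow> (\<Sum>Y\<in>Pow V. glauber V (nu R) X Y) \<le> 1"
  by (rule glauber_rows[OF finV nu_nonneg]) auto

lemma dd_both: "(\<forall>Y. dd R x0 t Y \<ge> 0) \<and> (x0 \<in> Pow V \<longrightarrow> (\<Sum>Y\<in>Pow V. dd R x0 t Y) \<le> 1)"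
  unfolding dd_def by (rule distr_mass[OF finV gl_nu_nn gl_nu_rows])

lemma dd_nonneg: "dd R x0 t Y \<ge> 0" using dd_both by blast

lemma dd_mass: "x0 \<in> Pow V \<Longrightarrow> (\<Sum>Y\<in>Pow V. dd R x0 t Y) \<le> 1" using dd_both by blast

lemma wt_nonneg: "wt X R \<ge> 0" using wt_pos[of X R] by simp

lemma Am_nonneg: "Am m X Y \<ge> 0"
  unfolding Am_def by (intro sum_nonneg mult_nonneg_nonneg wt_nonneg dd_nonneg)

lemma Am_rows:
  assumes X: "X \<in> Pow V"
  shows "(\<Sum>Y\<in>Pow V. Am m X Y) \<le> 1"
proof -
  have fX: "finite X" using X finV finite_subset by blast
  have "(\<Sum>Y\<in>Pow V. Am m X Y) = (\<Sum>R\<in>Pow X. wt X R * (\<Sum>Y\<in>Pow V. dd R X m Y))"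
    unfolding Am_def by (simp add: sum_distrib_left) (rule sum.swap)
  also have "\<dots> \<le> (\<Sum>R\<in>Pow X. wt X R * 1)"
    using dd_mass[OF X] wt_nonneg by (intro sum_mono mult_left_mono) auto
  also have "\<dots> = 1" using wt_sum[OF fX] by simp
  finally show ?thesis .
qed

lemma cm_props:
  "(\<forall>Y. distr_at V (Am m) V j Y \<ge> 0) \<and> (\<Sum>Y\<in>Pow V. distr_at V (Am m) V j Y) \<le> 1"
proof -
  have "(\<forall>Y. distr_at V (Am m) V j Y \<ge> 0) \<and> (V \<in> Pow V \<longrightarrow> (\<Sum>Y\<in>Pow V. distr_at V (Am m) V j Y) \<le> 1)"
    by (rule distr_mass[OF finV Am_nonneg Am_rows])
  then show ?thesis by simp
qed

lemma cm_supp: "distr_at V (Am m) V j Y \<noteq> 0 \<Longrightarrow> Y \<in> Om"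
proof (induction j arbitrary: Y)
  case 0 then show ?case using muV unfolding Om_def by (auto simp: distr_at_0 split: if_splits)
next
  case (Suc j)
  then have "(\<Sum>X\<in>Pow V. distr_at V (Am m) V j X * Am m X Y) \<noteq> 0"
    unfolding distr_at_Suc step_def by simp
  then obtain X where X: "distr_at V (Am m) V j X * Am m X Y \<noteq> 0"
    by (rule sum.not_neutral_contains_not_neutral)
  then have XO: "X \<in> Om" using Suc.IH by auto
  have "Am m X Y \<noteq> 0" using X by auto
  then obtain R where R: "R \<in> Pow X" "wt X R * dd R X m Y \<noteq> 0"
    unfolding Am_def by (rule sum.not_neutral_contains_not_neutral)
  then show ?case using dd_supp[OF XO, of R m Y] by auto
qed

lemma perX:
  assumes H: "\<And>X R. (X, R) \<in> DD \<Longrightarrow> dTV V (dd R X m) (nu R) \<le> dl" and X: "X \<in> Om"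
  shows "(\<Sum>Y\<in>Pow V. \<bar>Am m X Y - FD X Y\<bar>) \<le> 2 * dl"
proof -
  have XV: "X \<subseteq> V" using X Om_sub by auto
  have fX: "finite X" using XV finV finite_subset by blast
  have "(\<Sum>Y\<in>Pow V. \<bar>Am m X Y - FD X Y\<bar>) = (\<Sum>Y\<in>Pow V. \<bar>\<Sum>R\<in>Pow X. wt X R * (dd R X m Y - nu R Y)\<bar>)"
    unfolding Am_def FD_form[OF XV] by (simp add: sum_subtractf right_diff_distrib)
  also have "\<dots> \<le> (\<Sum>R\<in>Pow X. \<bar>wt X R\<bar> * (\<Sum>Y\<in>Pow V. \<bar>dd R X m Y - nu R Y\<bar>))"
    using fX finV by (intro sum_abs_kernel) auto
  also have "\<dots> \<le> (\<Sum>R\<in>Pow X. wt X R * (2 * dl))"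
  proof (intro sum_mono)
    fix R assume R: "R \<in> Pow X"
    then have "(X, R) \<in> DD" using X unfolding DD_def by auto
    then have "(\<Sum>Y\<in>Pow V. \<bar>dd R X m Y - nu R Y\<bar>) \<le> 2 * dl" using H unfolding dTV_def by fastforce
    then show "\<bar>wt X R\<bar> * (\<Sum>Y\<in>Pow V. \<bar>dd R X m Y - nu R Y\<bar>) \<le> wt X R * (2 * dl)"
      using wt_pos[of X R] by (simp add: mult_left_mono)
  qed
  also have "\<dots> = 2 * dl" using wt_sum[OF fX] by (simp add: sum_distrib_right[symmetric])
  finally show ?thesis .
qed

lemma union_bound:
  assumes H: "\<And>X R. (X, R) \<in> DD \<Longrightarrow> dTV V (dd R X m) (nu R) \<le> dl"
  shows "(\<Sum>Y\<in>Pow V. \<bar>distr_at V (Am m) V j Y - distr_at V FD V j Y\<bar>) \<le> 2 * real j * dl"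
proof (induction j)
  case 0 then show ?case by (simp add: distr_at_0)
next
  case (Suc j)
  let ?c = "distr_at V (Am m) V j" and ?f = "distr_at V FD V j"
  have "0 \<le> dTV V (dd V V m) (nu V)" unfolding dTV_def by (simp add: sum_nonneg)
  then have dl: "dl \<ge> 0" using H[OF VV_DD] by linarith
  have split: "distr_at V (Am m) V (Suc j) Y - distr_at V FD V (Suc j) Y =
      (\<Sum>X\<in>Pow V. ?c X * (Am m X Y - FD X Y)) + (\<Sum>X\<in>Pow V. (?c X - ?f X) * FD X Y)" for Y
  proof -
    have e: "?c X * (Am m X Y - FD X Y) + (?c X - ?f X) * FD X Y = ?c X * Am m X Y - ?f X * FD X Y" for X
      by (simp add: algebra_simps)
    have "(\<Sum>X\<in>Pow V. ?c X * (Am m X Y - FD X Y)) + (\<Sum>X\<in>Pow V. (?c X - ?f X) * FD X Y)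
        = (\<Sum>X\<in>Pow V. ?c X * Am m X Y - ?f X * FD X Y)"
      unfolding sum.distrib[symmetric] e ..
    also have "\<dots> = (\<Sum>X\<in>Pow V. ?c X * Am m X Y) - (\<Sum>X\<in>Pow V. ?f X * FD X Y)"
      by (rule sum_subtractf)
    finally show ?thesis unfolding distr_at_Suc step_def by simp
  qed
  have "(\<Sum>Y\<in>Pow V. \<bar>distr_at V (Am m) V (Suc j) Y - distr_at V FD V (Suc j) Y\<bar>)
      \<le> (\<Sum>Y\<in>Pow V. \<bar>\<Sum>X\<in>Pow V. ?c X * (Am m X Y - FD X Y)\<bar>) + (\<Sum>Y\<in>Pow V. \<bar>\<Sum>X\<in>Pow V. (?c X - ?f X) * FD X Y\<bar>)"
  proof -
    have "(\<Sum>Y\<in>Pow V. \<bar>distr_at V (Am m) V (Suc j) Y - distr_at V FD V (Suc j) Y\<bar>)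
        \<le> (\<Sum>Y\<in>Pow V. \<bar>\<Sum>X\<in>Pow V. ?c X * (Am m X Y - FD X Y)\<bar> + \<bar>\<Sum>X\<in>Pow V. (?c X - ?f X) * FD X Y\<bar>)"
    proof (intro sum_mono)
      fix Y
      show "\<bar>distr_at V (Am m) V (Suc j) Y - distr_at V FD V (Suc j) Y\<bar>
          \<le> \<bar>\<Sum>X\<in>Pow V. ?c X * (Am m X Y - FD X Y)\<bar> + \<bar>\<Sum>X\<in>Pow V. (?c X - ?f X) * FD X Y\<bar>"
        unfolding split[of Y] by (rule abs_triangle_ineq)
    qed
    then show ?thesis by (simp only: sum.distrib)
  qed
  also have "\<dots> \<le> (\<Sum>X\<in>Pow V. \<bar>?c X\<bar> * (\<Sum>Y\<in>Pow V. \<bar>Am m X Y - FD X Y\<bar>))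
      + (\<Sum>X\<in>Pow V. \<bar>?c X - ?f X\<bar> * (\<Sum>Y\<in>Pow V. \<bar>FD X Y\<bar>))"
    using finV by (intro add_mono sum_abs_kernel) auto
  also have "\<dots> \<le> (\<Sum>X\<in>Pow V. ?c X * (2 * dl)) + (\<Sum>X\<in>Pow V. \<bar>?c X - ?f X\<bar> * 1)"
  proof (intro add_mono sum_mono)
    fix X assume X: "X \<in> Pow V"
    show "\<bar>?c X\<bar> * (\<Sum>Y\<in>Pow V. \<bar>Am m X Y - FD X Y\<bar>) \<le> ?c X * (2 * dl)"
    proof (cases "?c X = 0")
      case False
      then have "X \<in> Om" by (rule cm_supp)
      then show ?thesis using perX[OF H] cm_props[of m j] by (simp add: mult_left_mono)
    qed simp
    show "\<bar>?c X - ?f X\<bar> * (\<Sum>Y\<in>Pow V. \<bar>FD X Y\<bar>) \<le> \<bar>?c X - ?f X\<bar> * 1"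
      using FD_rows[OF X] FD_nonneg by (intro mult_left_mono) auto
  qed
  also have "\<dots> \<le> 2 * dl + 2 * real j * dl"
  proof (intro add_mono)
    have "(\<Sum>X\<in>Pow V. ?c X * (2 * dl)) = (\<Sum>X\<in>Pow V. ?c X) * (2 * dl)" by (simp add: sum_distrib_right)
    also have "\<dots> \<le> 1 * (2 * dl)" using cm_props[of m j] dl by (intro mult_right_mono) auto
    finally show "(\<Sum>X\<in>Pow V. ?c X * (2 * dl)) \<le> 2 * dl" by simp
    show "(\<Sum>X\<in>Pow V. \<bar>?c X - ?f X\<bar> * 1) \<le> 2 * real j * dl" using Suc by simp
  qed
  finally show ?case by (simp add: algebra_simps)
qed

end

lemma mix_from_upper:
  assumes "dTV V (distr_at V P x0 t) q \<le> eps"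
  shows "mix_from V P q x0 eps \<le> enat t"
proof -
  have ex: "\<exists>t. dTV V (distr_at V P x0 t) q \<le> eps" using assms by blast
  have "(LEAST t. dTV V (distr_at V P x0 t) q \<le> eps) \<le> t" using assms by (rule Least_le)
  then show ?thesis unfolding mix_from_def using ex by simp
qed

lemma dTV_delta_zero:
  assumes "dTV V (\<lambda>Y. if Y = x0 then 1 else 0) mu \<le> eps"
  shows "T_GD_from V mu x0 eps = 0"
proof -
  have "T_GD_from V mu x0 eps \<le> enat 0"
    unfolding T_GD_from_def by (rule mix_from_upper) (use assms in \<open>simp add: distr_at_0\<close>)
  then show ?thesis by (metis le_zero_eq zero_enat_def)
qed

lemma dTV_tri:
  assumes "finite V"
  shows "dTV V p r \<le> dTV V p q + dTV V q r"
proof -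
  have "(\<Sum>Y\<in>Pow V. \<bar>p Y - r Y\<bar>) \<le> (\<Sum>Y\<in>Pow V. \<bar>p Y - q Y\<bar> + \<bar>q Y - r Y\<bar>)"
    by (intro sum_mono) linarith
  then show ?thesis unfolding dTV_def by (simp add: sum.distrib add_divide_distrib[symmetric] divide_right_mono)
qed

lemma dTV_sym: "dTV V p q = dTV V q p"
  unfolding dTV_def by (simp add: abs_minus_commute)

theorem theorem1p9:
  fixes V :: "'v set" and mu :: "'v set \<Rightarrow> real" and theta eps :: real
  assumes "finite V"
    and "is_dist V mu"
    and "monotone_system V mu"
    and "mu V > 0"
    and "0 < theta" and "theta < 1"
    and "0 < eps" and "eps < 1"
  shows "T_GD_from V mu V eps \<le>
           T_FD V mu theta (eps / 2) *
           T_tilted V mu theta (eps / (2 * real (the_enat (T_FD V mu theta (eps / 2)))))"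
proof (cases "V = {}")
  case True
  have "(\<Sum>X\<in>Pow V. mu X) = 1" using assms(2) unfolding is_dist_def by auto
  then have "mu {} = 1" using True by simp
  then have "dTV V (\<lambda>Y. if Y = V then 1 else 0) mu \<le> eps"
    using True assms(7) unfolding dTV_def by simp
  then have "T_GD_from V mu V eps = 0" by (rule dTV_delta_zero)
  then show ?thesis by simp
next
  case NE: False
  interpret M: msys V mu theta using assms NE by unfold_locales auto
  define TFD where "TFD = T_FD V mu theta (eps / 2)"
  have VS: "V \<in> support V mu" unfolding support_def using assms(4) by auto
  have FDle: "dTV V (distr_at V M.FD V k) mu \<le> eps / 2" if "TFD = enat k" for k
  proof -
    have "mix_from V M.FD mu V (eps / 2) \<le> TFD"
      unfolding TFD_def T_FD_def using VS by (rule SUP_upper)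
    then have "mix_from V M.FD mu V (eps / 2) \<le> enat k" using that by simp
    then show ?thesis using M.finV M.FD_nonneg M.FD_rows M.FD_stat by (intro mix_from_le) auto
  qed
  have tiltle: "dTV V (M.dd R X m) (M.nu R) \<le> dl"
    if TT: "T_tilted V mu theta dl = enat m" and XR: "(X, R) \<in> M.DD" for dl m X R
  proof -
    have D: "X \<subseteq> V" "mu X > 0" "R \<subseteq> X" using M.DD_D[OF XR] by auto
    have pm: "pin_mass V mu R R > 0" unfolding pin_mass_def
      using D M.finV M.mu_nonneg by (intro sum_pos2[where i=X]) auto
    have "T_GD V (cond V (tilt V theta mu) R R) dl \<le> T_tilted V mu theta dl"
      unfolding T_tilted_def using D pm by (intro SUP_upper) auto
    then have T1: "T_GD V (M.nu R) dl \<le> enat m" using TT unfolding M.nu_def by simp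
    have "M.nu R X = M.pi2 (X, R) * (theta ^ card R / ((1 - theta) ^ card R * M.Zt * M.PMt R))"
      by (rule M.nu_pi2[OF XR D(1)])
    moreover have "M.pi2 (X, R) > 0" by (rule M.pi2_pos[OF XR])
    moreover have "theta ^ card R / ((1 - theta) ^ card R * M.Zt * M.PMt R) > 0"
      using assms(5,6) M.Zt_pos M.PMt_pos[OF XR] by simp
    ultimately have "M.nu R X > 0" by (metis mult_pos_pos)
    then have XS: "X \<in> support V (M.nu R)" unfolding support_def using D by auto
    have "T_GD_from V (M.nu R) X dl \<le> T_GD V (M.nu R) dl"
      unfolding T_GD_def using XS by (rule SUP_upper)
    then have "mix_from V (glauber V (M.nu R)) (M.nu R) X dl \<le> enat m"
      using T1 unfolding T_GD_from_def by simp
    then show ?thesis unfolding M.dd_def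
      using M.finV M.gl_nu_nn M.gl_nu_rows glauber_stat[OF M.finV NE M.nu_nonneg]
      by (intro mix_from_le) auto
  qed
  have main: "T_GD_from V mu V eps \<le> enat (k * m)"
    if k: "k > 0" "TFD = enat k" and m: "T_tilted V mu theta (eps / (2 * real k)) = enat m" for k m
  proof -
    define dl where "dl = eps / (2 * real k)"
    have H: "\<And>X R. (X, R) \<in> M.DD \<Longrightarrow> dTV V (M.dd R X m) (M.nu R) \<le> dl"
      using tiltle m unfolding dl_def by blast
    have u: "(\<Sum>Y\<in>Pow V. \<bar>distr_at V (M.Am m) V k Y - distr_at V M.FD V k Y\<bar>) \<le> 2 * real k * dl"
      by (rule M.union_bound[OF H])
    have "2 * real k * dl = eps" unfolding dl_def using k by simp
    then have u2: "dTV V (distr_at V (M.Am m) V k) (distr_at V M.FD V k) \<le> eps / 2"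
      using u unfolding dTV_def by simp
    have "dTV V (distr_at V (M.Am m) V k) mu \<le> eps / 2 + eps / 2"
      using dTV_tri[OF M.finV, of "distr_at V (M.Am m) V k" mu "distr_at V M.FD V k"] u2 FDle[OF k(2)]
      by linarith
    then have "dTV V (distr_at V (glauber V mu) V (k * m)) mu \<le> eps"
      using M.key_compare[of k m] by simp
    then show ?thesis unfolding T_GD_from_def by (rule mix_from_upper)
  qed
  show ?thesis
  proof (cases TFD)
    case (enat k)
    show ?thesis
    proof (cases "k = 0")
      case True
      have "dTV V (distr_at V M.FD V 0) mu \<le> eps / 2" using FDle enat True by simp
      then have "dTV V (\<lambda>Y. if Y = V then 1 else 0) mu \<le> eps" using assms(7) by (simp add: distr_at_0)
      then have "T_GD_from V mu V eps = 0" by (rule dTV_delta_zero)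
      then show ?thesis by simp
    next
      case False
      then have kpos: "k > 0" by simp
      show ?thesis
      proof (cases "T_tilted V mu theta (eps / (2 * real k))")
        case (enat m)
        have "T_GD_from V mu V eps \<le> enat (k * m)" by (rule main[OF kpos \<open>TFD = enat k\<close> enat])
        then show ?thesis using \<open>TFD = enat k\<close> enat unfolding TFD_def by simp
      next
        case infinity
        then show ?thesis using \<open>TFD = enat k\<close> kpos unfolding TFD_def by simp
      qed
    qed
  next
    case infinity
    define dl where "dl = eps / (2 * real (the_enat TFD))"
    show ?thesis
    proof (cases "T_tilted V mu theta dl = 0")
      case False
      have infm: "(\<infinity>::enat) * x = \<infinity>" if "x \<noteq> 0" for x
        using that by (cases x) (auto simp: zero_enat_def)
      have "T_FD V mu theta (eps / 2) * T_tilted V mu theta (eps / (2 * real (the_enat (T_FD V mu theta (eps / 2))))) = \<infinity>"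
        using infinity False infm unfolding TFD_def dl_def by simp
      then show ?thesis by simp
    next
      case True
      have dl: "dl < 1 / 2"
      proof (cases "the_enat TFD = 0")
        case True then show ?thesis unfolding dl_def by simp
      next
        case False
        then have "real (the_enat TFD) \<ge> 1" by simp
        then have "dl \<le> eps / 2" unfolding dl_def using assms(7)
          by (intro divide_left_mono) auto
        then show ?thesis using assms(8) by simp
      qed
      have TT0: "T_tilted V mu theta dl = enat 0" using True by (simp add: zero_enat_def)
      have VO: "V \<in> M.Om" unfolding M.Om_def using assms(4) by auto
      have only: "X = V" if X: "X \<in> M.Om" for X
      proof (rule ccontr)
        assume ne: "X \<noteq> V"
        have d1: "dTV V (\<lambda>Y. if Y = V then 1 else 0) (M.nu {}) \<le> dl"
          using tiltle[OF TT0, of V "{}"] VO unfolding M.DD_def M.dd_def by (simp add: distr_at_0)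
        have d2: "dTV V (\<lambda>Y. if Y = X then 1 else 0) (M.nu {}) \<le> dl"
          using tiltle[OF TT0, of X "{}"] X unfolding M.DD_def M.dd_def by (simp add: distr_at_0)
        have "dTV V (\<lambda>Y. if Y = V then 1 else 0) (\<lambda>Y. if Y = X then 1 else 0) \<le> dl + dl"
          using dTV_tri[OF M.finV, of "\<lambda>Y. if Y = V then 1 else 0" "\<lambda>Y. if Y = X then 1 else 0" "M.nu {}"]
            d1 d2 dTV_sym[of V "\<lambda>Y. if Y = X then 1 else 0" "M.nu {}"] by linarith
        moreover have "dTV V (\<lambda>Y. if Y = V then 1 else 0) (\<lambda>Y. if Y = X then 1 else 0) = 1"
        proof -
          have XV: "X \<in> Pow V" using X M.Om_sub by auto
          have "(\<Sum>Y\<in>Pow V. \<bar>(if Y = V then 1 else 0) - (if Y = X then 1 else 0)\<bar>)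
              = (\<Sum>Y\<in>{V, X}. \<bar>(if Y = V then 1 else 0) - (if Y = X then 1 else (0::real))\<bar>)"
            by (rule sum.mono_neutral_right) (use M.finV XV in auto)
          also have "\<dots> = 2" using ne by simp
          finally show ?thesis unfolding dTV_def by simp
        qed
        ultimately show False using dl by simp
      qed
      have mu0: "mu Y = 0" if "Y \<in> Pow V" "Y \<noteq> V" for Y
        using only[of Y] that M.mu_nonneg[of Y] unfolding M.Om_def by fastforce
      have "(\<Sum>X\<in>Pow V. mu X) = 1" using assms(2) unfolding is_dist_def by auto
      moreover have "(\<Sum>X\<in>Pow V. mu X) = mu V"
      proof -
        have "(\<Sum>X\<in>Pow V. mu X) = mu V + (\<Sum>X\<in>Pow V - {V}. mu X)"
          using M.finV by (simp add: sum.remove)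
        moreover have "(\<Sum>X\<in>Pow V - {V}. mu X) = 0" using mu0 by (intro sum.neutral) auto
        ultimately show ?thesis by simp
      qed
      ultimately have muV1: "mu V = 1" by simp
      have "dTV V (\<lambda>Y. if Y = V then 1 else 0) mu = 0"
        unfolding dTV_def using mu0 muV1 by (intro divide_eq_0_iff[THEN iffD2] disjI1 sum.neutral) auto
      then have "T_GD_from V mu V eps = 0" using assms(7) by (intro dTV_delta_zero) simp
      then show ?thesis by simp
    qed
  qed
qed


end
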